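(* Let $p,d\in C^{2}([0,\infty),\mathbb{R})$, $b\in C^2([0,\infty),\mathbb{C})$, $c\in C^1([0,\infty),\mathbb{C})$, $q\in C([0,\infty),\mathbb{R})$ with $p>0$ on $[0,\infty)$, and assume: (B1) the (possibly improper) limit $d_\infty:=\lim_{t\to\infty}d(t)\in\mathbb{R}\cup\{\pm\infty\}$ exists; (B2) there are $\beta,\gamma>0$ with $|b(t)|\le\beta(|d(t)|+1)$, $|c(t)|\le\gamma(|d(t)|+1)$ for all $t\ge0$; (C1) for $\lambda\in\mathbb{R}\setminus(\overline{\Delta([0,\infty))}\cup\{d_\infty\})$ the limits $\lim_{t\to\infty}\pi(t,\lambda)$ and $\lim_{t\to\infty}\frac{\partial}{\partial t}\pi(t,\lambda)$ exist and are finite, and $\lim_{t\to\infty}\pi(t,\lambda)\neq0$ for some such $\lambda$; (C2) for $\lambda\in\mathbb{R}\setminus\{d_\infty\}$ the limits $\lim_{t\to\infty}\frac{\overline{b}c}{d-\lambda}(t)$ and $\lim_{t\to\infty}\frac{\partial}{\partial t}\frac{\overline{b}c}{d-\lambda}(t)$ exist and are finite; (C3) for $\lambda\in\mathbb{R}\setminus\{d_\infty\}$ the limit $\lim_{t\to\infty}\big(q-\lambda-\frac{|c|^2}{d-\lambda}\big)(t)$ exists and is finite. Let $\sigma^{\mathrm s}:=\{\lambda\in\mathbb{R}\setminus(\overline{\Delta([0,\infty))}\cup\{d_\infty\}):\ (\lim_{t\to\infty}\frac{\rho(t,\lambda)}{\pi(t,\lambda)})^2-4\lim_{t\to\infty}\frac{\kappa(t,\lambda)}{\pi(t,\lambda)}\ge0\}$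 and $E:=\overline{\Delta([0,\infty))}\cup\{d_\infty\}$. Then there exist $s_-,s_+,s\in\mathbb{R}$ with $s_-\le s_+\le s$ such that: (i) if $d_\infty\in\mathbb{R}$: when $\lim_{t\to\infty}p(t)>0$, either $\sigma^{\mathrm s}=([s_-,s_+]\cup[s,+\infty))\setminus E$ or $\sigma^{\mathrm s}=[s,+\infty)\setminus E$; when $\lim_{t\to\infty}p(t)=0$, $\sigma^{\mathrm s}=((-\infty,s_-]\cup[s_+,+\infty))\setminus E$; (ii) if $d_\infty=+\infty$: $\sigma^{\mathrm s}=[s_-,s_+]\setminus\overline{\Delta([0,\infty))}$ if $\lim_{t\to\infty}\frac{|b|^2}{d^2}>0$; $\sigma^{\mathrm s}=[s,+\infty)\setminus\overline{\Delta([0,\infty))}$ if $\lim\frac{|b|^2}{d^2}=0$ and $\lim_{t\to\infty}(p-\frac{|b|^2}{d})>0$; $\sigma^{\mathrm s}=(-\infty,s]\setminus\overline{\Delta([0,\infty))}$ if $\lim\frac{|b|^2}{d^2}=0$ and $\lim_{t\to\infty}(p-\frac{|b|^2}{d})<0$; (iii) if $d_\infty=-\infty$: $\sigma^{\mathrm s}=[s_-,s_+]\setminus\overline{\Delta([0,\infty))}$ if $\lim_{t\to\infty}\frac{|b|^2}{d^2}>0$; $\sigma^{\mathrm s}=[s,+\infty)\setminus\overline{\Delta([0,\infty))}$ if $\lim_{t\to\infty}\frac{|b|^2}{d^2}=0$.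
   Context: Notation: $\Delta(t):=d(t)-|b(t)|^2/p(t)$. For $t$ with $d(t)\ne\lambda$: $\pi(t,\lambda):=p(t)-\frac{|b(t)|^2}{d(t)-\lambda}$, $\rho(t,\lambda):=-\frac{2\operatorname{Im}(b(t)\overline{c(t)})}{d(t)-\lambda}+i\frac{\partial}{\partial t}\pi(t,\lambda)$, $\kappa(t,\lambda):=q(t)-\lambda-\frac{|c(t)|^2}{d(t)-\lambda}+\frac{\partial}{\partial t}\Big(\frac{\overline{b(t)}c(t)}{d(t)-\lambda}\Big)$. The limits of $p$, $|b|^2/d^2$, $p-|b|^2/d$ appearing in the case distinctions exist in the respective cases under the hypotheses. The set $\sigma^{\mathrm s}$ is the singular part $\sigma^{\mathrm s}_{\mathrm{ess}}(\mathcal{A})$ of the essential spectrum of every closed symmetric extension $\mathcal{A}$ of the operator $\mathcal{A}_0$ in $L^2(0,\infty)^2$, $\mathcal{A}_0\binom{y_1}{y_2}=\binom{-(py_1')'+qy_1-(\overline{b}y_2)'+\overline{c}y_2}{by_1'+cy_1+dy_2}$ on $C_0^2((0,\infty))\oplus C_0^1((0,\infty))$. *)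

theory Defs
  imports "HOL-Analysis.Analysis"
begin

text \<open>k-fold continuous differentiability on a set S (one-sided derivatives at boundary
  points of S, via derivatives within S).\<close>
definition C1_on :: "real set \<Rightarrow> (real \<Rightarrow> 'a::real_normed_vector) \<Rightarrow> bool" where
  "C1_on S f \<longleftrightarrow> (\<exists>f'. (\<forall>x\<in>S. (f has_vector_derivative f' x) (at x within S))
                         \<and> continuous_on S f')"

definition C2_on :: "real set \<Rightarrow> (real \<Rightarrow> 'a::real_normed_vector) \<Rightarrow> bool" where
  "C2_on S f \<longleftrightarrow> (\<exists>f' f''. (\<forall>x\<in>S. (f has_vector_derivative f' x) (at x within S))
                         \<and> (\<forall>x\<in>S. (f' has_vector_derivative f'' x) (at x within S))
                         \<and> continuous_on S f'')"

definition Delta :: "(real \<Rightarrow> real) \<Rightarrow> (real \<Rightarrow> complex) \<Rightarrow> (real \<Rightarrow> real) \<Rightarrow> real \<Rightarrow> real" where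
  "Delta p b d t = d t - (cmod (b t))\<^sup>2 / p t"

definition pi_fn :: "(real \<Rightarrow> real) \<Rightarrow> (real \<Rightarrow> complex) \<Rightarrow> (real \<Rightarrow> real) \<Rightarrow> real \<Rightarrow> real \<Rightarrow> real" where
  "pi_fn p b d t l = p t - (cmod (b t))\<^sup>2 / (d t - l)"

definition rho_fn :: "(real \<Rightarrow> real) \<Rightarrow> (real \<Rightarrow> complex) \<Rightarrow> (real \<Rightarrow> complex) \<Rightarrow> (real \<Rightarrow> real)
                      \<Rightarrow> real \<Rightarrow> real \<Rightarrow> complex" where
  "rho_fn p b c d t l = complex_of_real (- 2 * Im (b t * cnj (c t)) / (d t - l))
       + \<i> * complex_of_real (deriv (\<lambda>s. pi_fn p b d s l) t)"

definition kappa_fn :: "(real \<Rightarrow> real) \<Rightarrow> (real \<Rightarrow> complex) \<Rightarrow> (real \<Rightarrow> complex) \<Rightarrow> (real \<Rightarrow> real)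
                      \<Rightarrow> real \<Rightarrow> real \<Rightarrow> complex" where
  "kappa_fn q b c d t l = complex_of_real (q t - l - (cmod (c t))\<^sup>2 / (d t - l))
       + vector_derivative (\<lambda>s. cnj (b s) * c s / complex_of_real (d s - l)) (at t)"

definition sigma_s :: "(real \<Rightarrow> real) \<Rightarrow> (real \<Rightarrow> real) \<Rightarrow> (real \<Rightarrow> complex) \<Rightarrow> (real \<Rightarrow> complex)
                      \<Rightarrow> (real \<Rightarrow> real) \<Rightarrow> ereal \<Rightarrow> real set" where
  "sigma_s p q b c d dinf = {l. l \<notin> closure (Delta p b d ` {0..}) \<and> ereal l \<noteq> dinf \<and>
      (\<exists>L1 L2. ((\<lambda>t. rho_fn p b c d t l / complex_of_real (pi_fn p b d t l)) \<longlongrightarrow> L1) at_top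
             \<and> ((\<lambda>t. kappa_fn q b c d t l / complex_of_real (pi_fn p b d t l)) \<longlongrightarrow> L2) at_top
             \<and> Im (L1\<^sup>2 - 4 * L2) = 0 \<and> Re (L1\<^sup>2 - 4 * L2) \<ge> 0)}"

end

theory Submission
  imports Defs "HOL-Analysis.Analysis"
begin

lemma poly_lim:
  assumes F: "F \<le> (at_infinity::real filter)"
  shows "((\<lambda>x::real. a + b/x + c/x^2 + e/x^3) \<longlongrightarrow> a) F"
proof -
  have i: "filterlim (\<lambda>x::real. x) at_infinity F" using F by (simp add: filterlim_def)
  have "((\<lambda>x. a + b/x + c/x^2 + e/x^3) \<longlongrightarrow> a + 0 + 0 + 0) F"
  proof -
    have i2: "filterlim (\<lambda>x::real. x^2) at_infinity F" using filterlim_compose[OF filterlim_power_at_infinity[of 2] i] by simp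
    have i3: "filterlim (\<lambda>x::real. x^3) at_infinity F" using filterlim_compose[OF filterlim_power_at_infinity[of 3] i] by simp
    show ?thesis
      by (intro tendsto_add tendsto_const tendsto_divide_0[OF tendsto_const] i i2 i3)
  qed
  then show ?thesis by simp
qed


lemma lin_pos_set: "(k::real) > 0 \<Longrightarrow> {x. k*x+m \<ge> 0} = {-m/k..}"
  by (auto simp: field_simps)
lemma lin_neg_set: "(k::real) < 0 \<Longrightarrow> {x. k*x+m \<ge> 0} = {..-m/k}"
  by (auto simp: field_simps)

lemma prod2_sign: "(r1::real) \<le> r2 \<Longrightarrow> ((x-r1)*(x-r2) \<ge> 0) \<longleftrightarrow> (x \<le> r1 \<or> r2 \<le> x)"
  by (auto simp: zero_le_mult_iff)

lemma prod3_sign: "(u::real) \<le> v \<Longrightarrow> v \<le> w \<Longrightarrow> ((x-u)*(x-v)*(x-w) \<ge> 0) \<longleftrightarrow> ((u \<le> x \<and> x \<le> v) \<or> w \<le> x)"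
  by (auto simp: zero_le_mult_iff mult_le_0_iff)

lemma quad_factor:
  fixes a b c x :: real
  assumes a: "a \<noteq> 0" and D: "b^2 - 4*a*c \<ge> 0"
  shows "a*x^2+b*x+c = a*(x - (-b - sqrt (b^2-4*a*c))/(2*a))*(x - (-b + sqrt (b^2-4*a*c))/(2*a))"
proof -
  define s where "s = sqrt (b^2-4*a*c)"
  have s2: "s^2 = b^2-4*a*c" using D by (simp add: s_def)
  have "a*(x - (-b - s)/(2*a))*(x - (-b + s)/(2*a)) = ((2*a*x+b)^2 - s^2)/(4*a)"
    using a by (simp add: field_simps power2_eq_square)
  also have "\<dots> = a*x^2+b*x+c" using a s2 by (simp add: field_simps power2_eq_square)
  finally show ?thesis by (simp add: s_def)
qed

lemma quad_pos_set:
  fixes a b c :: real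
  assumes a: "a > 0"
  shows "\<exists>sm sp. sm \<le> sp \<and> {x. a*x^2+b*x+c \<ge> 0} = {..sm} \<union> {sp..}"
proof (cases "b^2 - 4*a*c \<ge> 0")
  case True
  define r1 where "r1 = (-b - sqrt (b^2-4*a*c))/(2*a)"
  define r2 where "r2 = (-b + sqrt (b^2-4*a*c))/(2*a)"
  have le: "r1 \<le> r2" unfolding r1_def r2_def using a True by (intro divide_right_mono) auto
  have "\<And>x. a*x^2+b*x+c = a*((x-r1)*(x-r2))"
    using quad_factor[OF _ True] a unfolding r1_def r2_def by (simp add: mult.assoc)
  then have "{x. a*x^2+b*x+c \<ge> 0} = {x. (x-r1)*(x-r2) \<ge> 0}"
    using a by (simp add: zero_le_mult_iff)
  also have "\<dots> = {..r1} \<union> {r2..}" using prod2_sign[OF le] by auto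
  finally show ?thesis using le by blast
next
  case False
  have "\<And>x. a*x^2+b*x+c > 0"
  proof -
    fix x
    have "4*a*(a*x^2+b*x+c) = (2*a*x+b)^2 - (b^2-4*a*c)" by (simp add: algebra_simps power2_eq_square)
    also have "\<dots> > 0" using False by (smt (verit) zero_le_power2)
    finally show "a*x^2+b*x+c > 0" using a by (simp add: zero_less_mult_iff)
  qed
  then have "{x. a*x^2+b*x+c \<ge> 0} = {..0} \<union> {0..}" by (auto intro: less_imp_le)
  then show ?thesis by blast
qed

lemma quad_neg_set:
  fixes a b c x0 :: real
  assumes a: "a < 0" and x0: "a*x0^2+b*x0+c \<ge> 0"
  shows "\<exists>sm sp. sm \<le> sp \<and> {x. a*x^2+b*x+c \<ge> 0} = {sm..sp}"
proof -
  have D: "b^2 - 4*a*c \<ge> 0"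
  proof -
    have "4*a*(a*x0^2+b*x0+c) = (2*a*x0+b)^2 - (b^2-4*a*c)" by (simp add: algebra_simps power2_eq_square)
    moreover have "4*a*(a*x0^2+b*x0+c) \<le> 0" using a x0 by (simp add: mult_nonpos_nonneg)
    ultimately show ?thesis by (smt (verit) zero_le_power2)
  qed
  define r1 where "r1 = (-b + sqrt (b^2-4*a*c))/(2*a)"
  define r2 where "r2 = (-b - sqrt (b^2-4*a*c))/(2*a)"
  have le: "r1 \<le> r2" unfolding r1_def r2_def using a D by (intro divide_right_mono_neg) auto
  have "\<And>x. a*x^2+b*x+c = a*((x-r1)*(x-r2))"
  proof -
    fix x
    have "a*x^2+b*x+c = a*(x - (-b - sqrt (b^2-4*a*c))/(2*a))*(x - (-b + sqrt (b^2-4*a*c))/(2*a))"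
      using quad_factor[OF _ D] a by simp
    then show "a*x^2+b*x+c = a*((x-r1)*(x-r2))" unfolding r1_def r2_def by (simp add: mult_ac)
  qed
  then have "{x. a*x^2+b*x+c \<ge> 0} = {x. (x-r1)*(x-r2) \<le> 0}"
    using a by (simp add: zero_le_mult_iff)
  also have "\<dots> = {r1..r2}" using le by (auto simp: mult_le_0_iff)
  finally show ?thesis using le by blast
qed

lemma cubic_root:
  fixes a b c e :: real
  assumes a: "a > 0"
  shows "\<exists>r. a*r^3+b*r^2+c*r+e = 0"
proof -
  define G where "G = (\<lambda>x::real. a*x^3+b*x^2+c*x+e)"
  have id: "\<And>x. x \<noteq> 0 \<Longrightarrow> G x = x^3 * (a + b/x + c/x^2 + e/x^3)"
    unfolding G_def by (simp add: field_simps power2_eq_square power3_eq_cube)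
  have l1: "((\<lambda>x::real. a + b/x + c/x^2 + e/x^3) \<longlongrightarrow> a) at_top" by (rule poly_lim[OF at_top_le_at_infinity])
  have l2: "((\<lambda>x::real. a + b/x + c/x^2 + e/x^3) \<longlongrightarrow> a) at_bot" by (rule poly_lim[OF at_bot_le_at_infinity])
  have "eventually (\<lambda>x. a + b/x + c/x^2 + e/x^3 > 0) at_top"
    using order_tendstoD(1)[OF l1 a] .
  then obtain N where N: "\<And>x. x \<ge> N \<Longrightarrow> a + b/x + c/x^2 + e/x^3 > 0"
    by (auto simp: eventually_at_top_linorder)
  define x1 where "x1 = max N 1"
  have x1: "G x1 > 0" using N[of x1] id[of x1] by (simp add: x1_def)
  have "eventually (\<lambda>x. a + b/x + c/x^2 + e/x^3 > 0) at_bot"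
    using order_tendstoD(1)[OF l2 a] .
  then obtain N' where N': "\<And>x. x \<le> N' \<Longrightarrow> a + b/x + c/x^2 + e/x^3 > 0"
    by (auto simp: eventually_at_bot_linorder)
  define x2 where "x2 = min N' (-1)"
  have "x2 < 0" by (simp add: x2_def)
  then have "x2^3 < 0" by (simp add: power_less_zero_eq)
  then have x2: "G x2 < 0" using N'[of x2] id[of x2] by (simp add: x2_def mult_neg_pos)
  have "x2 \<le> x1" by (simp add: x1_def x2_def)
  have "continuous_on {x2..x1} G" unfolding G_def by (intro continuous_intros)
  then obtain r where "G r = 0" using IVT'[of G x2 0 x1] x1 x2 \<open>x2 \<le> x1\<close> by force
  then show ?thesis unfolding G_def by blast
qed

lemma cubic_set:
  fixes a b c e :: real
  assumes a: "a > 0"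
  shows "\<exists>sm sp s. sm \<le> sp \<and> sp \<le> s \<and>
    ({x. a*x^3+b*x^2+c*x+e \<ge> 0} = {sm..sp} \<union> {s..} \<or> {x. a*x^3+b*x^2+c*x+e \<ge> 0} = {s..})"
proof -
  obtain r where r: "a*r^3+b*r^2+c*r+e = 0" using cubic_root[OF a] by blast
  define \<beta> where "\<beta> = b/a + r"
  define \<gamma> where "\<gamma> = c/a + r*\<beta>"
  have fac: "\<And>x. a*x^3+b*x^2+c*x+e = a*((x-r)*(x^2+\<beta>*x+\<gamma>))"
  proof -
    fix x
    have e: "e = -(a*r^3+b*r^2+c*r)" using r by simp
    show "a*x^3+b*x^2+c*x+e = a*((x-r)*(x^2+\<beta>*x+\<gamma>))"
      unfolding e \<beta>_def \<gamma>_def using a by (simp add: field_simps power2_eq_square power3_eq_cube)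
  qed
  then have S: "{x. a*x^3+b*x^2+c*x+e \<ge> 0} = {x. (x-r)*(x^2+\<beta>*x+\<gamma>) \<ge> 0}"
    using a by (simp add: zero_le_mult_iff)
  show ?thesis
  proof (cases "\<beta>^2 - 4*1*\<gamma> \<ge> 0")
    case False
    have pos: "\<And>x. x^2+\<beta>*x+\<gamma> > 0"
    proof -
      fix x
      have "4*(x^2+\<beta>*x+\<gamma>) = (2*x+\<beta>)^2 - (\<beta>^2-4*\<gamma>)" by (simp add: algebra_simps power2_eq_square)
      also have "\<dots> > 0" using False zero_le_power2[of "2*x+\<beta>"] by linarith
      finally show "x^2+\<beta>*x+\<gamma> > 0" by simp
    qed
    have "{x. (x-r)*(x^2+\<beta>*x+\<gamma>) \<ge> 0} = {r..}"
      proof (intro set_eqI iffI)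
      fix x assume "x \<in> {x. (x-r)*(x^2+\<beta>*x+\<gamma>) \<ge> 0}"
      then show "x \<in> {r..}" using pos[of x] by (auto simp: zero_le_mult_iff)
    next
      fix x assume "x \<in> {r..}"
      then show "x \<in> {x. (x-r)*(x^2+\<beta>*x+\<gamma>) \<ge> 0}" using pos[of x] by simp
    qed
    then show ?thesis using S by (intro exI[of _ r]) auto
  next
    case True
    define r1 where "r1 = (-\<beta> - sqrt (\<beta>^2-4*1*\<gamma>))/(2*1)"
    define r2 where "r2 = (-\<beta> + sqrt (\<beta>^2-4*1*\<gamma>))/(2*1)"
    have le: "r1 \<le> r2" unfolding r1_def r2_def using True by auto
    have "\<And>x. x^2+\<beta>*x+\<gamma> = (x-r1)*(x-r2)"
      using quad_factor[OF _ True] unfolding r1_def r2_def by simp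
    then have S2: "{x. a*x^3+b*x^2+c*x+e \<ge> 0} = {x. (x-r)*(x-r1)*(x-r2) \<ge> 0}"
      using S by (simp add: mult.assoc)
    consider "r \<le> r1" | "r1 \<le> r \<and> r \<le> r2" | "r2 \<le> r" by linarith
    then show ?thesis
    proof cases
      case 1
      have "{x. (x-r)*(x-r1)*(x-r2) \<ge> 0} = {r..r1} \<union> {r2..}"
        using prod3_sign[OF 1 le] by (simp add: set_eq_iff)
      then show ?thesis using S2 1 le by (intro exI[of _ r] exI[of _ r1] exI[of _ r2]) simp
    next
      case 2
      have cm: "\<And>x. (x-r)*(x-r1)*(x-r2) = (x-r1)*(x-r)*(x-r2)" by (simp add: mult_ac)
      have "{x. (x-r)*(x-r1)*(x-r2) \<ge> 0} = {r1..r} \<union> {r2..}"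
        unfolding cm using prod3_sign[of r1 r r2] 2 by (simp add: set_eq_iff)
      then show ?thesis using S2 2 le by (intro exI[of _ r1] exI[of _ r] exI[of _ r2]) simp
    next
      case 3
      have cm: "\<And>x. (x-r)*(x-r1)*(x-r2) = (x-r1)*(x-r2)*(x-r)" by (simp add: mult_ac)
      have "{x. (x-r)*(x-r1)*(x-r2) \<ge> 0} = {r1..r2} \<union> {r..}"
        unfolding cm using prod3_sign[of r1 r2 r] 3 le by (simp add: set_eq_iff)
      then show ?thesis using S2 3 le by (intro exI[of _ r1] exI[of _ r2] exI[of _ r]) simp
    qed
  qed
qed



lemma deriv_lim_zero_pos:
  fixes f f' :: "real \<Rightarrow> real"
  assumes f: "(f \<longlongrightarrow> A) at_top" and f': "(f' \<longlongrightarrow> M) at_top"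
    and ev: "eventually (\<lambda>t. (f has_real_derivative f' t) (at t)) at_top"
    and M: "M > 0"
  shows False
proof -
  have "eventually (\<lambda>t. f' t > M/2) at_top" using order_tendstoD(1)[OF f', of "M/2"] M by simp
  with ev have "eventually (\<lambda>t. f' t > M/2 \<and> (f has_real_derivative f' t) (at t)) at_top"
    by (rule eventually_conj[rotated])
  then obtain T where T: "\<And>t. t \<ge> T \<Longrightarrow> f' t > M/2 \<and> (f has_real_derivative f' t) (at t)"
    by (auto simp: eventually_at_top_linorder)
  have inc: "M/2 \<le> f (t+1) - f t" if "t \<ge> T" for t
  proof -
    have "\<exists>z>t. z < t+1 \<and> f (t+1) - f t = (t+1-t) * f' z"
      by (rule MVT2) (use T that in auto)
    then obtain z where z: "z > t" "z < t+1" "f (t+1) - f t = (t+1-t) * f' z" by blast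
    then show ?thesis using T[of z] that by simp
  qed
  have lim1: "LIM t at_top. (t::real) + 1 :> at_top"
    using filterlim_tendsto_add_at_top[OF tendsto_const[of "1::real"] filterlim_ident[of "at_top::real filter"]] by (simp add: add.commute)
  have "((\<lambda>t. f (t+1)) \<longlongrightarrow> A) at_top" using filterlim_compose[OF f lim1] by simp
  then have "((\<lambda>t. f (t+1) - f t) \<longlongrightarrow> A - A) at_top" using f by (intro tendsto_diff)
  moreover have "eventually (\<lambda>t. M/2 \<le> f (t+1) - f t) at_top"
    unfolding eventually_at_top_linorder using inc by (intro exI[of _ T] allI impI)
  ultimately have "M/2 \<le> A - A" by (rule tendsto_lowerbound) (rule trivial_limit_at_top_linorder)
  then show False using M by simp
qed

lemma deriv_lim_zero:
  fixes f f' :: "real \<Rightarrow> real"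
  assumes f: "(f \<longlongrightarrow> A) at_top" and f': "(f' \<longlongrightarrow> M) at_top"
    and ev: "eventually (\<lambda>t. (f has_real_derivative f' t) (at t)) at_top"
  shows "M = 0"
proof (rule ccontr)
  assume "M \<noteq> 0"
  then consider "M > 0" | "M < 0" by linarith
  then show False
  proof cases
    case 1 then show False by (rule deriv_lim_zero_pos[OF f f' ev])
  next
    case 2
    have "((\<lambda>t. - f t) \<longlongrightarrow> - A) at_top" using f by (intro tendsto_minus)
    moreover have "((\<lambda>t. - f' t) \<longlongrightarrow> - M) at_top" using f' by (intro tendsto_minus)
    moreover have "eventually (\<lambda>t. ((\<lambda>t. - f t) has_real_derivative - f' t) (at t)) at_top"
      using ev by (rule eventually_mono) (rule DERIV_minus)
    ultimately show False by (rule deriv_lim_zero_pos) (use 2 in simp)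
  qed
qed

lemma deriv_lim_zero_complex:
  fixes g g' :: "real \<Rightarrow> complex"
  assumes g: "(g \<longlongrightarrow> A) at_top" and g': "(g' \<longlongrightarrow> M) at_top"
    and ev: "eventually (\<lambda>t. (g has_vector_derivative g' t) (at t)) at_top"
  shows "M = 0"
proof -
  have evR: "eventually (\<lambda>t. ((\<lambda>t. Re (g t)) has_real_derivative Re (g' t)) (at t)) at_top"
    using ev by (rule eventually_mono) (simp add: has_vector_derivative_complex_iff)
  have evI: "eventually (\<lambda>t. ((\<lambda>t. Im (g t)) has_real_derivative Im (g' t)) (at t)) at_top"
    using ev by (rule eventually_mono) (simp add: has_vector_derivative_complex_iff)
  have "Re M = 0"
    by (rule deriv_lim_zero[OF tendsto_Re[OF g] tendsto_Re[OF g'] evR])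
  moreover have "Im M = 0"
    by (rule deriv_lim_zero[OF tendsto_Im[OF g] tendsto_Im[OF g'] evI])
  ultimately show ?thesis by (simp add: complex_eq_iff)
qed

lemma within0_to_at:
  assumes "(f has_vector_derivative f') (at t within {0..})" "(t::real) > 0"
  shows "(f has_vector_derivative f') (at t)"
proof -
  have "(f has_vector_derivative f') (at t within {0<..})"
    by (rule has_vector_derivative_within_subset[OF assms(1)]) auto
  then show ?thesis using assms(2) has_vector_derivative_within_open[of t "{0<..}" f f'] by simp
qed



locale ctx =
  fixes p d q :: "real \<Rightarrow> real" and b c :: "real \<Rightarrow> complex" and dinf :: ereal
  assumes p_C2: "C2_on {0..} p" and d_C2: "C2_on {0..} d" and b_C2: "C2_on {0..} b"
    and c_C1: "C1_on {0..} c"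
    and p_pos: "\<forall>t\<ge>0. p t > 0"
    and B1: "((\<lambda>t. ereal (d t)) \<longlongrightarrow> dinf) at_top"
    and C1: "\<forall>l. l \<notin> closure (Delta p b d ` {0..}) \<and> ereal l \<noteq> dinf \<longrightarrow>
               (\<exists>L. ((\<lambda>t. pi_fn p b d t l) \<longlongrightarrow> L) at_top) \<and>
               (\<exists>L. ((\<lambda>t. deriv (\<lambda>s. pi_fn p b d s l) t) \<longlongrightarrow> L) at_top)"
    and C1': "\<exists>l. l \<notin> closure (Delta p b d ` {0..}) \<and> ereal l \<noteq> dinf \<and>
               (\<exists>L. ((\<lambda>t. pi_fn p b d t l) \<longlongrightarrow> L) at_top \<and> L \<noteq> 0)"
    and C2: "\<forall>l. ereal l \<noteq> dinf \<longrightarrow>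
               (\<exists>L. ((\<lambda>t. cnj (b t) * c t / complex_of_real (d t - l)) \<longlongrightarrow> L) at_top) \<and>
               (\<exists>L. ((\<lambda>t. vector_derivative (\<lambda>s. cnj (b s) * c s / complex_of_real (d s - l)) (at t))
                        \<longlongrightarrow> L) at_top)"
    and C3: "\<forall>l. ereal l \<noteq> dinf \<longrightarrow>
               (\<exists>L. ((\<lambda>t. q t - l - (cmod (c t))\<^sup>2 / (d t - l)) \<longlongrightarrow> L) at_top)"
begin

abbreviation "Dc \<equiv> closure (Delta p b d ` {0..})"
abbreviation "\<sigma> \<equiv> sigma_s p q b c d dinf"

lemma ders:
  assumes t: "t > 0"
  obtains p' d' b' c' where "(p has_real_derivative p') (at t)" "(d has_real_derivative d') (at t)"
    "(b has_vector_derivative b') (at t)" "(c has_vector_derivative c') (at t)"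
proof -
  obtain p1 p2 where "\<forall>x\<in>{0..}. (p has_vector_derivative p1 x) (at x within {0..})"
    using p_C2 unfolding C2_on_def by blast
  then have "(p has_vector_derivative p1 t) (at t)" using t by (intro within0_to_at) auto
  then have 1: "(p has_real_derivative p1 t) (at t)" by (simp add: has_real_derivative_iff_has_vector_derivative)
  obtain d1 d2 where "\<forall>x\<in>{0..}. (d has_vector_derivative d1 x) (at x within {0..})"
    using d_C2 unfolding C2_on_def by blast
  then have "(d has_vector_derivative d1 t) (at t)" using t by (intro within0_to_at) auto
  then have 2: "(d has_real_derivative d1 t) (at t)" by (simp add: has_real_derivative_iff_has_vector_derivative)
  obtain b1 b2 where "\<forall>x\<in>{0..}. (b has_vector_derivative b1 x) (at x within {0..})"
    using b_C2 unfolding C2_on_def by blast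
  then have 3: "(b has_vector_derivative b1 t) (at t)" using t by (intro within0_to_at) auto
  obtain c1 where "\<forall>x\<in>{0..}. (c has_vector_derivative c1 x) (at x within {0..})"
    using c_C1 unfolding C1_on_def by blast
  then have 4: "(c has_vector_derivative c1 t) (at t)" using t by (intro within0_to_at) auto
  show ?thesis by (rule that[OF 1 2 3 4])
qed

lemma diff_pi:
  assumes t: "t > 0" and dl: "d t \<noteq> l"
  shows "((\<lambda>s. pi_fn p b d s l) has_real_derivative deriv (\<lambda>s. pi_fn p b d s l) t) (at t)"
proof -
  obtain p' d' b' c' where D: "(p has_real_derivative p') (at t)" "(d has_real_derivative d') (at t)"
    "(b has_vector_derivative b') (at t)" "(c has_vector_derivative c') (at t)" by (rule ders[OF t])
  have re: "((\<lambda>s. Re (b s)) has_real_derivative Re b') (at t)"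
   and im: "((\<lambda>s. Im (b s)) has_real_derivative Im b') (at t)"
    using D(3) by (auto simp: has_vector_derivative_complex_iff)
  have eq: "(\<lambda>s. pi_fn p b d s l) = (\<lambda>s. p s - ((Re (b s))^2 + (Im (b s))^2) / (d s - l))"
    by (simp add: pi_fn_def cmod_power2)
  have "\<exists>D. ((\<lambda>s. p s - ((Re (b s))^2 + (Im (b s))^2) / (d s - l)) has_real_derivative D) (at t)"
  proof -
    note n = DERIV_add[OF DERIV_power[OF re, of 2] DERIV_power[OF im, of 2]]
    have dl': "d t - l \<noteq> 0" using dl by simp
    show ?thesis
      using DERIV_diff[OF D(1) DERIV_divide[OF n DERIV_diff[OF D(2) DERIV_const] dl']] by blast
  qed
  then have "(\<lambda>s. pi_fn p b d s l) differentiable (at t)"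
    unfolding eq by (auto simp: real_differentiable_def)
  then show ?thesis using DERIV_deriv_iff_real_differentiable by blast
qed

lemma diff_g:
  assumes t: "t > 0" and dl: "d t \<noteq> l"
  shows "((\<lambda>s. cnj (b s) * c s / complex_of_real (d s - l)) has_vector_derivative
           vector_derivative (\<lambda>s. cnj (b s) * c s / complex_of_real (d s - l)) (at t)) (at t)"
proof -
  obtain p' d' b' c' where D0: "(p has_real_derivative p') (at t)" and D: "(d has_real_derivative d') (at t)"
    "(b has_vector_derivative b') (at t)" "(c has_vector_derivative c') (at t)" by (rule ders[OF t])
  have eq: "(\<lambda>s. cnj (b s) * c s / complex_of_real (d s - l)) = (\<lambda>s. inverse (d s - l) *\<^sub>R (cnj (b s) * c s))"
    by (rule ext) (simp add: scaleR_conv_of_real divide_inverse mult.commute of_real_inverse)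
  have i: "((\<lambda>s. inverse (d s - l)) has_real_derivative - (inverse (d t - l) * (d' - 0) * inverse (d t - l))) (at t)"
  proof (rule DERIV_inverse')
    show "((\<lambda>s. d s - l) has_real_derivative d' - 0) (at t)" by (intro derivative_intros D)
  qed (simp add: dl)
  have "\<exists>D. ((\<lambda>s. inverse (d s - l) *\<^sub>R (cnj (b s) * c s)) has_vector_derivative D) (at t)"
    using has_vector_derivative_scaleR[OF i has_vector_derivative_mult[OF has_vector_derivative_cnj[OF D(2)] D(3)]] by blast
  then obtain DD where "((\<lambda>s. inverse (d s - l) *\<^sub>R (cnj (b s) * c s)) has_vector_derivative DD) (at t)" by blast
  then have "(\<lambda>s. cnj (b s) * c s / complex_of_real (d s - l)) differentiable (at t)"
    unfolding eq by (rule differentiableI_vector)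
  then show ?thesis using vector_derivative_works by blast
qed

end


context ctx begin

lemma member_iff:
  assumes l: "l \<notin> Dc" "ereal l \<noteq> dinf"
    and ev: "eventually (\<lambda>t. d t \<noteq> l) at_top"
    and P: "((\<lambda>t. pi_fn p b d t l) \<longlongrightarrow> P) at_top" and P0: "P \<noteq> 0"
    and A: "((\<lambda>t. - 2 * Im (b t * cnj (c t)) / (d t - l)) \<longlongrightarrow> A) at_top"
    and Q: "((\<lambda>t. q t - l - (cmod (c t))\<^sup>2 / (d t - l)) \<longlongrightarrow> Q) at_top"
  shows "l \<in> \<sigma> \<longleftrightarrow> A^2 - 4*Q*P \<ge> 0"
proof -
  have ev2: "eventually (\<lambda>t. t > 0 \<and> d t \<noteq> l) at_top"
    using eventually_conj[OF eventually_gt_at_top[of 0] ev] .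
  obtain L' where L': "((\<lambda>t. deriv (\<lambda>s. pi_fn p b d s l) t) \<longlongrightarrow> L') at_top"
    using C1 l by blast
  have L'0: "L' = 0"
    by (rule deriv_lim_zero[OF P L'], rule eventually_mono[OF ev2], rule diff_pi) auto
  obtain K G' where K: "((\<lambda>t. cnj (b t) * c t / complex_of_real (d t - l)) \<longlongrightarrow> K) at_top"
    and G': "((\<lambda>t. vector_derivative (\<lambda>s. cnj (b s) * c s / complex_of_real (d s - l)) (at t)) \<longlongrightarrow> G') at_top"
    using C2 l by blast
  have G'0: "G' = 0"
    by (rule deriv_lim_zero_complex[OF K G'], rule eventually_mono[OF ev2], rule diff_g) auto
  have r: "((\<lambda>t. rho_fn p b c d t l / complex_of_real (pi_fn p b d t l)) \<longlongrightarrow> complex_of_real (A/P)) at_top"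
  proof -
    have "((\<lambda>t. rho_fn p b c d t l) \<longlongrightarrow> complex_of_real A + \<i> * complex_of_real L') at_top"
      unfolding rho_fn_def by (intro tendsto_intros A L')
    then have "((\<lambda>t. rho_fn p b c d t l / complex_of_real (pi_fn p b d t l)) \<longlongrightarrow>
        (complex_of_real A + \<i> * complex_of_real L') / complex_of_real P) at_top"
      using P0 by (intro tendsto_divide tendsto_of_real P) auto
    then show ?thesis using L'0 by simp
  qed
  have k: "((\<lambda>t. kappa_fn q b c d t l / complex_of_real (pi_fn p b d t l)) \<longlongrightarrow> complex_of_real (Q/P)) at_top"
  proof -
    have "((\<lambda>t. kappa_fn q b c d t l) \<longlongrightarrow> complex_of_real Q + G') at_top"
      unfolding kappa_fn_def by (intro tendsto_intros Q G')
    then have "((\<lambda>t. kappa_fn q b c d t l / complex_of_real (pi_fn p b d t l)) \<longlongrightarrow>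
        (complex_of_real Q + G') / complex_of_real P) at_top"
      using P0 by (intro tendsto_divide tendsto_of_real P) auto
    then show ?thesis using G'0 by simp
  qed
  have "l \<in> \<sigma> \<longleftrightarrow> (Im ((complex_of_real (A/P))\<^sup>2 - 4 * complex_of_real (Q/P)) = 0 \<and>
                   Re ((complex_of_real (A/P))\<^sup>2 - 4 * complex_of_real (Q/P)) \<ge> 0)"
  proof
    assume "l \<in> \<sigma>"
    then obtain L1 L2 where L1: "((\<lambda>t. rho_fn p b c d t l / complex_of_real (pi_fn p b d t l)) \<longlongrightarrow> L1) at_top"
      and L2: "((\<lambda>t. kappa_fn q b c d t l / complex_of_real (pi_fn p b d t l)) \<longlongrightarrow> L2) at_top"
      and c: "Im (L1\<^sup>2 - 4 * L2) = 0 \<and> Re (L1\<^sup>2 - 4 * L2) \<ge> 0"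
      unfolding sigma_s_def by blast
    have "L1 = complex_of_real (A/P)" using tendsto_unique[OF _ L1 r] by simp
    moreover have "L2 = complex_of_real (Q/P)" using tendsto_unique[OF _ L2 k] by simp
    ultimately show "Im ((complex_of_real (A/P))\<^sup>2 - 4 * complex_of_real (Q/P)) = 0 \<and>
                   Re ((complex_of_real (A/P))\<^sup>2 - 4 * complex_of_real (Q/P)) \<ge> 0" using c by simp
  next
    assume "Im ((complex_of_real (A/P))\<^sup>2 - 4 * complex_of_real (Q/P)) = 0 \<and>
                   Re ((complex_of_real (A/P))\<^sup>2 - 4 * complex_of_real (Q/P)) \<ge> 0"
    then show "l \<in> \<sigma>" unfolding sigma_s_def mem_Collect_eq
      by (intro conjI l exI[of _ "complex_of_real (A/P)"] exI[of _ "complex_of_real (Q/P)"] r k) auto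
  qed
  also have "\<dots> \<longleftrightarrow> (A/P)^2 - 4*(Q/P) \<ge> 0"
  proof -
    have e: "(complex_of_real (A/P))\<^sup>2 - 4 * complex_of_real (Q/P) = complex_of_real ((A/P)^2 - 4*(Q/P))"
      by simp
    show ?thesis unfolding e Re_complex_of_real Im_complex_of_real by simp
  qed
  also have "(A/P)^2 - 4*(Q/P) = (A^2 - 4*Q*P) / P^2"
    using P0 by (simp add: field_simps power2_eq_square)
  also have "\<dots> \<ge> 0 \<longleftrightarrow> A^2 - 4*Q*P \<ge> 0"
    using P0 by (simp add: zero_le_divide_iff)
  finally show ?thesis .
qed

end

context ctx begin

lemma delta_in_Dc:
  assumes "((\<lambda>t. Delta p b d t) \<longlongrightarrow> l) at_top"
  shows "l \<in> Dc"
proof (rule Lim_in_closed_set[OF closed_closure _ _ assms])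
  show "eventually (\<lambda>t. Delta p b d t \<in> Dc) at_top"
  proof (rule eventually_mono[OF eventually_ge_at_top[of "0::real"]])
    fix t :: real assume "0 \<le> t"
    then have "Delta p b d t \<in> Delta p b d ` {0..}" by simp
    then show "Delta p b d t \<in> Dc" by (rule subsetD[OF closure_subset])
  qed
qed simp

lemma Im_swap: "Im (x * cnj y) = - Im (cnj x * y)"
  by simp

lemma ident_c:
  fixes x y w qq l1 l2 :: real
  assumes "x \<noteq> 0" "y \<noteq> 0" "x - y = 1" "l2 - l1 = 1"
  shows "((qq - l1 - w/x) - (qq - l2 - w/y) - 1)*x*y = w"
proof -
  have "((qq - l1 - w/x) - (qq - l2 - w/y) - 1)*x*y = ((l2 - l1 - 1) - w/x + w/y)*x*y" by (simp add: algebra_simps)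
  also have "\<dots> = (w/y - w/x)*x*y" using assms(4) by simp
  also have "\<dots> = w*(x - y)" using assms(1,2) by (simp add: field_simps)
  finally show ?thesis using assms(3) by simp
qed

lemma ident2:
  fixes u K a C L B :: real
  assumes u: "u \<noteq> 0"
  shows "(2*K/u)^2 - 4*(a - C/u)*(L - B/u) = 4*(K^2 - (a*u - C)*(L*u - B))/u^2"
  using u by (simp add: field_simps power2_eq_square)

lemma fin_case:
  assumes dD: "dinf = ereal D" and pL: "(p \<longlongrightarrow> L) at_top" and L: "L \<ge> 0"
  shows "\<exists>Kr B C q0. B \<ge> 0 \<and> (L = 0 \<longrightarrow> B > 0) \<and>
     (\<forall>l. l \<notin> Dc \<and> l \<noteq> D \<longrightarrow> (l \<in> \<sigma> \<longleftrightarrow> Kr^2 - ((q0-l)*(D-l) - C)*(L*(D-l) - B) \<ge> 0))"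
proof -
  have dlim: "(d \<longlongrightarrow> D) at_top" using B1 dD by simp
  have evne: "eventually (\<lambda>t. d t \<noteq> l) at_top" if "l \<noteq> D" for l
    by (rule tendsto_imp_eventually_ne[OF dlim]) (use that in auto)
  obtain l0 P0 where l0: "l0 \<notin> Dc" "ereal l0 \<noteq> dinf" and P0: "((\<lambda>t. pi_fn p b d t l0) \<longlongrightarrow> P0) at_top" "P0 \<noteq> 0"
    using C1' by blast
  have l0D: "l0 \<noteq> D" using l0(2) dD by simp
  define B where "B = (L - P0) * (D - l0)"
  have hb: "((\<lambda>t. (cmod (b t))^2) \<longlongrightarrow> B) at_top"
  proof (rule Lim_transform_eventually)
    show "((\<lambda>t. (p t - pi_fn p b d t l0) * (d t - l0)) \<longlongrightarrow> B) at_top"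
      unfolding B_def by (intro tendsto_intros pL P0(1) dlim)
    show "eventually (\<lambda>t. (p t - pi_fn p b d t l0) * (d t - l0) = (cmod (b t))^2) at_top"
      using evne[OF l0D] by (rule eventually_mono) (simp add: pi_fn_def)
  qed
  have B0: "B \<ge> 0" by (rule tendsto_lowerbound[OF hb]) auto
  have BL: "L = 0 \<longrightarrow> B > 0"
  proof
    assume "L = 0"
    then have "B \<noteq> 0" using P0(2) l0D by (simp add: B_def)
    then show "B > 0" using B0 by simp
  qed
  define l1 where "l1 = D + 1"
  define l2 where "l2 = D + 2"
  have l1D: "ereal l1 \<noteq> dinf" "l1 \<noteq> D" and l2D: "ereal l2 \<noteq> dinf" "l2 \<noteq> D" by (auto simp: dD l1_def l2_def)
  obtain K1 where K1: "((\<lambda>t. cnj (b t) * c t / complex_of_real (d t - l1)) \<longlongrightarrow> K1) at_top"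
    using C2 l1D by blast
  define K where "K = K1 * complex_of_real (D - l1)"
  have hk: "((\<lambda>t. cnj (b t) * c t) \<longlongrightarrow> K) at_top"
  proof (rule Lim_transform_eventually)
    show "((\<lambda>t. cnj (b t) * c t / complex_of_real (d t - l1) * complex_of_real (d t - l1)) \<longlongrightarrow> K) at_top"
      unfolding K_def by (intro tendsto_intros K1 dlim)
    show "eventually (\<lambda>t. cnj (b t) * c t / complex_of_real (d t - l1) * complex_of_real (d t - l1) = cnj (b t) * c t) at_top"
      using evne[OF l1D(2)] by (rule eventually_mono) simp
  qed
  define Kr where "Kr = Im K"
  obtain Q1 where Q1: "((\<lambda>t. q t - l1 - (cmod (c t))\<^sup>2 / (d t - l1)) \<longlongrightarrow> Q1) at_top"
    using C3 l1D by blast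
  obtain Q2 where Q2: "((\<lambda>t. q t - l2 - (cmod (c t))\<^sup>2 / (d t - l2)) \<longlongrightarrow> Q2) at_top"
    using C3 l2D by blast
  define C where "C = (Q1 - Q2 - 1) * (D - l1) * (D - l2)"
  have hc: "((\<lambda>t. (cmod (c t))^2) \<longlongrightarrow> C) at_top"
  proof (rule Lim_transform_eventually)
    show "((\<lambda>t. ((q t - l1 - (cmod (c t))\<^sup>2 / (d t - l1)) - (q t - l2 - (cmod (c t))\<^sup>2 / (d t - l2)) - 1)
             * (d t - l1) * (d t - l2)) \<longlongrightarrow> C) at_top"
      unfolding C_def by (intro tendsto_intros Q1 Q2 dlim)
    show "eventually (\<lambda>t. ((q t - l1 - (cmod (c t))\<^sup>2 / (d t - l1)) - (q t - l2 - (cmod (c t))\<^sup>2 / (d t - l2)) - 1)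
             * (d t - l1) * (d t - l2) = (cmod (c t))^2) at_top"
      using eventually_conj[OF evne[OF l1D(2)] evne[OF l2D(2)]]
    proof (rule eventually_mono)
      fix t assume "d t \<noteq> l1 \<and> d t \<noteq> l2"
      then have a: "d t - l1 \<noteq> 0" "d t - l2 \<noteq> 0" by auto
      show "((q t - l1 - (cmod (c t))\<^sup>2 / (d t - l1)) - (q t - l2 - (cmod (c t))\<^sup>2 / (d t - l2)) - 1)
             * (d t - l1) * (d t - l2) = (cmod (c t))^2"
        by (rule ident_c) (use a in \<open>auto simp: l1_def l2_def\<close>)
    qed
  qed
  define q0 where "q0 = Q1 + l1 + C / (D - l1)"
  have hq: "(q \<longlongrightarrow> q0) at_top"
  proof -
    have "((\<lambda>t. (q t - l1 - (cmod (c t))\<^sup>2 / (d t - l1)) + l1 + (cmod (c t))\<^sup>2 / (d t - l1)) \<longlongrightarrow> q0) at_top"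
      unfolding q0_def using l1D(2) by (intro tendsto_intros Q1 hc dlim) simp
    then show ?thesis by simp
  qed
  have main: "l \<in> \<sigma> \<longleftrightarrow> Kr^2 - ((q0-l)*(D-l) - C)*(L*(D-l) - B) \<ge> 0" if l: "l \<notin> Dc" "l \<noteq> D" for l
  proof -
    have Dl: "D - l \<noteq> 0" using l by simp
    have le: "ereal l \<noteq> dinf" using l dD by simp
    have hP: "((\<lambda>t. pi_fn p b d t l) \<longlongrightarrow> L - B / (D - l)) at_top"
      unfolding pi_fn_def using Dl by (intro tendsto_intros pL hb dlim) simp
    have hA: "((\<lambda>t. - 2 * Im (b t * cnj (c t)) / (d t - l)) \<longlongrightarrow> 2 * Kr / (D - l)) at_top"
    proof -
      have "((\<lambda>t. 2 * Im (cnj (b t) * c t) / (d t - l)) \<longlongrightarrow> 2 * Kr / (D - l)) at_top"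
        unfolding Kr_def using Dl by (intro tendsto_intros hk dlim) simp
      then show ?thesis by (simp add: Im_swap)
    qed
    have hQ: "((\<lambda>t. q t - l - (cmod (c t))\<^sup>2 / (d t - l)) \<longlongrightarrow> q0 - l - C / (D - l)) at_top"
      using Dl by (intro tendsto_intros hq hc dlim) simp
    have Pne: "L - B / (D - l) \<noteq> 0"
    proof
      assume P0': "L - B / (D - l) = 0"
      show False
      proof (cases "L = 0")
        case True
        then show False using P0' BL Dl by simp
      next
        case False
        then have Lp: "L > 0" using L by simp
        have "((\<lambda>t. l + (d t - l) * pi_fn p b d t l / p t) \<longlongrightarrow> l + (D - l) * (L - B / (D - l)) / L) at_top"
          using Lp by (intro tendsto_intros dlim hP pL) simp
        then have "((\<lambda>t. l + (d t - l) * pi_fn p b d t l / p t) \<longlongrightarrow> l) at_top" using P0' by simp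
        then have "((\<lambda>t. Delta p b d t) \<longlongrightarrow> l) at_top"
        proof (rule Lim_transform_eventually)
          show "eventually (\<lambda>t. l + (d t - l) * pi_fn p b d t l / p t = Delta p b d t) at_top"
            using eventually_conj[OF evne[OF l(2)] eventually_ge_at_top[of "0::real"]]
          proof (rule eventually_mono)
            fix t assume t: "d t \<noteq> l \<and> 0 \<le> t"
            then have "p t > 0" "d t - l \<noteq> 0" using p_pos by auto
            then show "l + (d t - l) * pi_fn p b d t l / p t = Delta p b d t"
              by (simp add: pi_fn_def Delta_def field_simps)
          qed
        qed
        then show False using delta_in_Dc l(1) by blast
      qed
    qed
    have "l \<in> \<sigma> \<longleftrightarrow> (2 * Kr / (D - l))^2 - 4 * (q0 - l - C / (D - l)) * (L - B / (D - l)) \<ge> 0"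
      by (rule member_iff[OF l(1) le evne[OF l(2)] hP Pne hA hQ])
    also have "(2 * Kr / (D - l))^2 - 4 * (q0 - l - C / (D - l)) * (L - B / (D - l))
        = 4 * (Kr^2 - ((q0-l)*(D-l) - C)*(L*(D-l) - B)) / (D - l)^2"
      by (rule ident2[OF Dl])
    also have "\<dots> \<ge> 0 \<longleftrightarrow> Kr^2 - ((q0-l)*(D-l) - C)*(L*(D-l) - B) \<ge> 0"
      using Dl by (simp add: zero_le_divide_iff)
    finally show ?thesis .
  qed
  show ?thesis by (intro exI[of _ Kr] exI[of _ B] exI[of _ C] exI[of _ q0] conjI B0 BL allI impI main) auto
qed

end

lemma idP: fixes x P w u v k :: real
  assumes "u \<noteq> 0" "v \<noteq> 0" "x \<noteq> 0" "v - u = k"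
  shows "P - w/v = (P - w/u) + (w/x^2)*(x/u)*(x/v)*k"
proof -
  have "P - w/v = (P - w/u) + (w/x^2)*(x/u)*(x/v)*(v - u)"
    using assms(1-3) by (simp add: field_simps power2_eq_square)
  then show ?thesis using assms(4) by simp
qed
lemma idA: fixes x l y :: real
  assumes "x \<noteq> 0" "x \<noteq> l"
  shows "2*(y/(x-0))*((x-0)/(x-l)) = 2*y/(x-l)"
  using assms by (simp add: field_simps)
lemma idC: fixes x y qq w :: real
  assumes "x \<noteq> 0" "y \<noteq> 0" "x - y = 1"
  shows "(qq - w/x) - (qq - 1 - w/y) - 1 = w/(x*y)"
proof -
  have "(qq - w/x) - (qq - 1 - w/y) - 1 = w*(x-y)/(x*y)" using assms(1,2) by (simp add: field_simps)
  then show ?thesis using assms(3) by simp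
qed
lemma idQ: fixes x y v qq w l :: real
  assumes "x \<noteq> 0" "y \<noteq> 0" "v \<noteq> 0" "x - v = l"
  shows "qq - l - w/v = (qq - w/x) - l - (w/(x*y))*(y/v)*l"
proof -
  have z: "(w/(x*y))*(y/v)*(x - v) = w/v - w/x" using assms(1-3) by (simp add: field_simps)
  have "qq - l - w/v = (qq - w/x) - l - (w/v - w/x)" by simp
  also have "\<dots> = (qq - w/x) - l - (w/(x*y))*(y/v)*(x - v)" by (simp only: z)
  finally show ?thesis using assms(4) by simp
qed
lemma idD: fixes x v pp w l :: real
  assumes "pp \<noteq> 0" "v \<noteq> 0" "x - v = l"
  shows "x - w/pp = l + (pp - w/v)*(v/pp)"
proof -
  have "(pp - w/v)*(v/pp) = v - w/pp" using assms(1,2) by (simp add: field_simps)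
  then show ?thesis using assms(3) by simp
qed
lemma idPd: fixes x v pp w :: real
  assumes "x \<noteq> 0" "v \<noteq> 0"
  shows "pp/v = (pp - w/v)/v + (w/x^2)*(x/v)^2"
  using assms by (simp add: field_simps power2_eq_square)
lemma idR: fixes x v y a l :: real
  assumes "x \<noteq> 0" "v \<noteq> 0" "y = x - a" "v = x - l"
  shows "y/v = (1 - a * inverse x)/(1 - l * inverse x)"
proof -
  have "1 - a * inverse x = y/x" "1 - l * inverse x = v/x" using assms by (simp_all add: field_simps)
  then show ?thesis using assms(1,2) by simp
qed

context ctx begin

lemma inf_big:
  assumes inf: "dinf = \<infinity> \<or> dinf = -\<infinity>"
  shows "eventually (\<lambda>t. R < \<bar>d t\<bar>) at_top"
proof (cases "dinf = \<infinity>")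
  case True
  then have "((\<lambda>t. ereal (d t)) \<longlongrightarrow> \<infinity>) at_top" using B1 by simp
  then have "eventually (\<lambda>t. ereal R < ereal (d t)) at_top" unfolding tendsto_PInfty by blast
  then show ?thesis by (rule eventually_mono) simp
next
  case False
  then have "((\<lambda>t. ereal (d t)) \<longlongrightarrow> -\<infinity>) at_top" using B1 inf by simp
  then have "eventually (\<lambda>t. ereal (d t) < ereal (-R)) at_top" unfolding tendsto_MInfty by blast
  then show ?thesis by (rule eventually_mono) simp
qed

lemma inf_ne:
  assumes inf: "dinf = \<infinity> \<or> dinf = -\<infinity>"
  shows "eventually (\<lambda>t. d t \<noteq> l) at_top"
  using inf_big[OF inf, of "\<bar>l\<bar>"] by (rule eventually_mono) auto

lemma inf_invd:
  assumes inf: "dinf = \<infinity> \<or> dinf = -\<infinity>"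
  shows "((\<lambda>t. inverse (d t)) \<longlongrightarrow> 0) at_top"
proof -
  have "filterlim d at_infinity at_top"
    unfolding filterlim_at_infinity[OF order_refl]
  proof (intro allI impI)
    fix r :: real assume "0 < r"
    show "eventually (\<lambda>t. r \<le> norm (d t)) at_top"
      using inf_big[OF inf, of r] by (rule eventually_mono) simp
  qed
  then show ?thesis by (rule filterlim_compose[OF tendsto_inverse_0])
qed

lemma inf_ratio:
  assumes inf: "dinf = \<infinity> \<or> dinf = -\<infinity>"
  shows "((\<lambda>t. (d t - a) / (d t - l)) \<longlongrightarrow> 1) at_top"
proof (rule Lim_transform_eventually)
  show "((\<lambda>t. (1 - a * inverse (d t)) / (1 - l * inverse (d t))) \<longlongrightarrow> 1) at_top"
    using tendsto_divide[OF tendsto_diff[OF tendsto_const[of 1] tendsto_mult[OF tendsto_const[of a] inf_invd[OF inf]]]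
        tendsto_diff[OF tendsto_const[of 1] tendsto_mult[OF tendsto_const[of l] inf_invd[OF inf]]]] by simp
  show "eventually (\<lambda>t. (1 - a * inverse (d t)) / (1 - l * inverse (d t)) = (d t - a) / (d t - l)) at_top"
    using eventually_conj[OF inf_ne[OF inf, of 0] inf_ne[OF inf, of l]]
    by (rule eventually_mono) (rule idR[symmetric], auto)
qed

lemma inf_common:
  assumes inf: "dinf = \<infinity> \<or> dinf = -\<infinity>"
    and Lb: "((\<lambda>t. (cmod (b t))\<^sup>2 / (d t)\<^sup>2) \<longlongrightarrow> L) at_top"
    and hP0: "((\<lambda>t. pi_fn p b d t l0) \<longlongrightarrow> P0) at_top"
  shows "\<exists>Kr Q0 Cc. Cc \<ge> 0 \<and> (\<forall>l. ((\<lambda>t. pi_fn p b d t l) \<longlongrightarrow> P0 + L*(l0-l)) at_top) \<and>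
     (\<forall>l. l \<notin> Dc \<and> P0 + L*(l0-l) \<noteq> 0 \<longrightarrow>
        (l \<in> \<sigma> \<longleftrightarrow> Kr^2 - (Q0 - l*(1+Cc))*(P0 + L*(l0-l)) \<ge> 0))"
proof -
  have ne: "\<And>l. eventually (\<lambda>t. d t \<noteq> l) at_top" by (rule inf_ne[OF inf])
  have rat: "\<And>a l. ((\<lambda>t. (d t - a) / (d t - l)) \<longlongrightarrow> 1) at_top" by (rule inf_ratio[OF inf])
  have hP: "((\<lambda>t. pi_fn p b d t l) \<longlongrightarrow> P0 + L*(l0-l)) at_top" for l
  proof (rule Lim_transform_eventually)
    show "((\<lambda>t. pi_fn p b d t l0 + ((cmod (b t))\<^sup>2 / (d t)\<^sup>2) * ((d t - 0)/(d t - l0)) * ((d t - 0)/(d t - l)) * (l0 - l))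
        \<longlongrightarrow> P0 + L*(l0-l)) at_top"
      using tendsto_add[OF hP0 tendsto_mult[OF tendsto_mult[OF tendsto_mult[OF Lb rat[of 0 l0]] rat[of 0 l]] tendsto_const[of "l0 - l"]]]
      by simp
    show "eventually (\<lambda>t. pi_fn p b d t l0 + ((cmod (b t))\<^sup>2 / (d t)\<^sup>2) * ((d t - 0)/(d t - l0)) * ((d t - 0)/(d t - l)) * (l0 - l)
        = pi_fn p b d t l) at_top"
      using eventually_conj[OF ne[of 0] eventually_conj[OF ne[of l0] ne[of l]]]
    proof (rule eventually_mono)
      fix t assume t: "d t \<noteq> 0 \<and> d t \<noteq> l0 \<and> d t \<noteq> l"
      show "pi_fn p b d t l0 + ((cmod (b t))\<^sup>2 / (d t)\<^sup>2) * ((d t - 0)/(d t - l0)) * ((d t - 0)/(d t - l)) * (l0 - l)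
        = pi_fn p b d t l"
        unfolding pi_fn_def using idP[of "d t - l0" "d t - l" "d t" "l0 - l" "p t" "(cmod (b t))\<^sup>2"] t by simp
    qed
  qed
  have z0: "ereal 0 \<noteq> dinf" "ereal 1 \<noteq> dinf" using inf by auto
  obtain K0 where K0: "((\<lambda>t. cnj (b t) * c t / complex_of_real (d t - 0)) \<longlongrightarrow> K0) at_top"
    using C2 z0 by blast
  define Kr where "Kr = Im K0"
  have hA: "((\<lambda>t. - 2 * Im (b t * cnj (c t)) / (d t - l)) \<longlongrightarrow> 2 * Kr) at_top" for l
  proof (rule Lim_transform_eventually)
    show "((\<lambda>t. 2 * Im (cnj (b t) * c t / complex_of_real (d t - 0)) * ((d t - 0)/(d t - l))) \<longlongrightarrow> 2 * Kr) at_top"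
      using tendsto_mult[OF tendsto_mult[OF tendsto_const[of 2] tendsto_Im[OF K0]] rat[of 0 l]]
      by (simp add: Kr_def)
    show "eventually (\<lambda>t. 2 * Im (cnj (b t) * c t / complex_of_real (d t - 0)) * ((d t - 0)/(d t - l))
        = - 2 * Im (b t * cnj (c t)) / (d t - l)) at_top"
      using eventually_conj[OF ne[of 0] ne[of l]]
    proof (rule eventually_mono)
      fix t assume t: "d t \<noteq> 0 \<and> d t \<noteq> l"
      have "Im (cnj (b t) * c t / complex_of_real (d t - 0)) = Im (cnj (b t) * c t) / (d t - 0)"
        by (simp add: Im_divide_of_real)
      then show "2 * Im (cnj (b t) * c t / complex_of_real (d t - 0)) * ((d t - 0)/(d t - l))
        = - 2 * Im (b t * cnj (c t)) / (d t - l)"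
        using idA[of "d t" l "Im (cnj (b t) * c t)"] t by (simp add: Im_swap)
    qed
  qed
  obtain Q0 where Q0: "((\<lambda>t. q t - 0 - (cmod (c t))\<^sup>2 / (d t - 0)) \<longlongrightarrow> Q0) at_top"
    using C3 z0 by blast
  obtain Q1 where Q1: "((\<lambda>t. q t - 1 - (cmod (c t))\<^sup>2 / (d t - 1)) \<longlongrightarrow> Q1) at_top"
    using C3 z0 by blast
  define Cc where "Cc = Q0 - Q1 - 1"
  have hcc: "((\<lambda>t. (cmod (c t))\<^sup>2 / (d t * (d t - 1))) \<longlongrightarrow> Cc) at_top"
  proof (rule Lim_transform_eventually)
    show "((\<lambda>t. (q t - 0 - (cmod (c t))\<^sup>2 / (d t - 0)) - (q t - 1 - (cmod (c t))\<^sup>2 / (d t - 1)) - 1) \<longlongrightarrow> Cc) at_top"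
      unfolding Cc_def by (intro tendsto_diff Q0 Q1 tendsto_const)
    show "eventually (\<lambda>t. (q t - 0 - (cmod (c t))\<^sup>2 / (d t - 0)) - (q t - 1 - (cmod (c t))\<^sup>2 / (d t - 1)) - 1
        = (cmod (c t))\<^sup>2 / (d t * (d t - 1))) at_top"
      using eventually_conj[OF ne[of 0] ne[of 1]]
    proof (rule eventually_mono)
      fix t assume t: "d t \<noteq> 0 \<and> d t \<noteq> 1"
      show "(q t - 0 - (cmod (c t))\<^sup>2 / (d t - 0)) - (q t - 1 - (cmod (c t))\<^sup>2 / (d t - 1)) - 1
        = (cmod (c t))\<^sup>2 / (d t * (d t - 1))"
        using idC[of "d t" "d t - 1" "q t" "(cmod (c t))\<^sup>2"] t by simp
    qed
  qed
  have Cc0: "Cc \<ge> 0"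
  proof (rule tendsto_lowerbound[OF hcc])
    show "eventually (\<lambda>t. 0 \<le> (cmod (c t))\<^sup>2 / (d t * (d t - 1))) at_top"
      using inf_big[OF inf, of 1]
    proof (rule eventually_mono)
      fix t assume "1 < \<bar>d t\<bar>"
      then have "d t * (d t - 1) > 0"
        by (cases "d t \<ge> 0") (auto intro: mult_pos_pos mult_neg_neg)
      then show "0 \<le> (cmod (c t))\<^sup>2 / (d t * (d t - 1))" by simp
    qed
  qed simp
  have hQ: "((\<lambda>t. q t - l - (cmod (c t))\<^sup>2 / (d t - l)) \<longlongrightarrow> Q0 - l*(1+Cc)) at_top" for l
  proof (rule Lim_transform_eventually)
    show "((\<lambda>t. (q t - 0 - (cmod (c t))\<^sup>2 / (d t - 0)) - l - ((cmod (c t))\<^sup>2 / (d t * (d t - 1))) * ((d t - 1)/(d t - l)) * l)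
       \<longlongrightarrow> Q0 - l*(1+Cc)) at_top"
      using tendsto_diff[OF tendsto_diff[OF Q0 tendsto_const[of l]] tendsto_mult[OF tendsto_mult[OF hcc rat[of 1 l]] tendsto_const[of l]]]
      by (simp add: algebra_simps)
    show "eventually (\<lambda>t. (q t - 0 - (cmod (c t))\<^sup>2 / (d t - 0)) - l - ((cmod (c t))\<^sup>2 / (d t * (d t - 1))) * ((d t - 1)/(d t - l)) * l
       = q t - l - (cmod (c t))\<^sup>2 / (d t - l)) at_top"
      using eventually_conj[OF ne[of 0] eventually_conj[OF ne[of 1] ne[of l]]]
    proof (rule eventually_mono)
      fix t assume t: "d t \<noteq> 0 \<and> d t \<noteq> 1 \<and> d t \<noteq> l"
      show "(q t - 0 - (cmod (c t))\<^sup>2 / (d t - 0)) - l - ((cmod (c t))\<^sup>2 / (d t * (d t - 1))) * ((d t - 1)/(d t - l)) * l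
       = q t - l - (cmod (c t))\<^sup>2 / (d t - l)"
        using idQ[of "d t" "d t - 1" "d t - l" l "q t" "(cmod (c t))\<^sup>2"] t by simp
    qed
  qed
  have main: "l \<in> \<sigma> \<longleftrightarrow> Kr^2 - (Q0 - l*(1+Cc))*(P0 + L*(l0-l)) \<ge> 0"
    if l: "l \<notin> Dc" "P0 + L*(l0-l) \<noteq> 0" for l
  proof -
    have le: "ereal l \<noteq> dinf" using inf by auto
    have "l \<in> \<sigma> \<longleftrightarrow> (2*Kr)^2 - 4*(Q0 - l*(1+Cc))*(P0 + L*(l0-l)) \<ge> 0"
      by (rule member_iff[OF l(1) le ne[of l] hP l(2) hA hQ])
    also have "(2*Kr)^2 - 4*(Q0 - l*(1+Cc))*(P0 + L*(l0-l)) = 4*(Kr^2 - (Q0 - l*(1+Cc))*(P0 + L*(l0-l)))"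
      by (simp add: power2_eq_square algebra_simps)
    finally show ?thesis by simp
  qed
  show ?thesis
    by (intro exI[of _ Kr] exI[of _ Q0] exI[of _ Cc] conjI Cc0 allI impI hP main) auto
qed

end

context ctx begin

lemma delta_inf:
  assumes inf: "dinf = \<infinity> \<or> dinf = -\<infinity>"
    and Lb: "((\<lambda>t. (cmod (b t))\<^sup>2 / (d t)\<^sup>2) \<longlongrightarrow> L) at_top" and L: "L > 0"
    and hz: "((\<lambda>t. pi_fn p b d t l) \<longlongrightarrow> 0) at_top"
  shows "l \<in> Dc"
proof -
  have ne: "\<And>l. eventually (\<lambda>t. d t \<noteq> l) at_top" by (rule inf_ne[OF inf])
  have rat: "\<And>a l. ((\<lambda>t. (d t - a) / (d t - l)) \<longlongrightarrow> 1) at_top" by (rule inf_ratio[OF inf])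
  have pd: "((\<lambda>t. p t / (d t - l)) \<longlongrightarrow> L) at_top"
  proof (rule Lim_transform_eventually)
    show "((\<lambda>t. pi_fn p b d t l * inverse (d t) * ((d t - 0)/(d t - l)) + ((cmod (b t))\<^sup>2 / (d t)\<^sup>2) * ((d t - 0)/(d t - l))^2)
       \<longlongrightarrow> L) at_top"
      using tendsto_add[OF tendsto_mult[OF tendsto_mult[OF hz inf_invd[OF inf]] rat[of 0 l]] tendsto_mult[OF Lb tendsto_power[OF rat[of 0 l], of 2]]]
      by simp
    show "eventually (\<lambda>t. pi_fn p b d t l * inverse (d t) * ((d t - 0)/(d t - l)) + ((cmod (b t))\<^sup>2 / (d t)\<^sup>2) * ((d t - 0)/(d t - l))^2
       = p t / (d t - l)) at_top"
      using eventually_conj[OF ne[of 0] ne[of l]]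
    proof (rule eventually_mono)
      fix t assume t: "d t \<noteq> 0 \<and> d t \<noteq> l"
      then have v: "d t - l \<noteq> 0" by simp
      have "pi_fn p b d t l * inverse (d t) * ((d t - 0)/(d t - l)) = pi_fn p b d t l / (d t - l)"
        using t v by (simp add: field_simps)
      then show "pi_fn p b d t l * inverse (d t) * ((d t - 0)/(d t - l)) + ((cmod (b t))\<^sup>2 / (d t)\<^sup>2) * ((d t - 0)/(d t - l))^2
       = p t / (d t - l)"
        using idPd[of "d t" "d t - l" "p t" "(cmod (b t))\<^sup>2"] t v by (simp add: pi_fn_def)
    qed
  qed
  have inv: "((\<lambda>t. (d t - l) / p t) \<longlongrightarrow> inverse L) at_top"
    using tendsto_inverse[OF pd] L by simp
  have "((\<lambda>t. l + pi_fn p b d t l * ((d t - l) / p t)) \<longlongrightarrow> l + 0 * inverse L) at_top"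
    by (intro tendsto_intros hz inv)
  then have lim: "((\<lambda>t. l + pi_fn p b d t l * ((d t - l) / p t)) \<longlongrightarrow> l) at_top" by simp
  have "((\<lambda>t. Delta p b d t) \<longlongrightarrow> l) at_top"
  proof (rule Lim_transform_eventually[OF lim])
    show "eventually (\<lambda>t. l + pi_fn p b d t l * ((d t - l) / p t) = Delta p b d t) at_top"
      using eventually_conj[OF ne[of l] eventually_ge_at_top[of "0::real"]]
    proof (rule eventually_mono)
      fix t assume t: "d t \<noteq> l \<and> 0 \<le> t"
      then have "p t \<noteq> 0" "d t - l \<noteq> 0" using p_pos by auto
      then show "l + pi_fn p b d t l * ((d t - l) / p t) = Delta p b d t"
        using idD[of "p t" "d t - l" "d t" l "(cmod (b t))\<^sup>2"] unfolding pi_fn_def Delta_def by simp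
    qed
  qed
  then show ?thesis by (rule delta_in_Dc)
qed

lemma sigma_sub: "l \<in> \<sigma> \<Longrightarrow> l \<notin> Dc \<and> ereal l \<noteq> dinf"
  unfolding sigma_s_def by simp

lemma sigma_eq:
  assumes "\<And>l. l \<notin> Dc \<Longrightarrow> ereal l \<noteq> dinf \<Longrightarrow> (l \<in> \<sigma> \<longleftrightarrow> H l \<ge> (0::real))"
    and "{l. H l \<ge> 0} = S"
  shows "\<sigma> = S - (Dc \<union> {l. ereal l = dinf})"
proof (intro set_eqI iffI)
  fix l assume l: "l \<in> \<sigma>"
  then have "l \<notin> Dc \<and> ereal l \<noteq> dinf" by (rule sigma_sub)
  then show "l \<in> S - (Dc \<union> {l. ereal l = dinf})" using assms l by auto
next
  fix l assume l: "l \<in> S - (Dc \<union> {l. ereal l = dinf})"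
  then have "H l \<ge> 0" "l \<notin> Dc" "ereal l \<noteq> dinf" using assms(2) by auto
  then show "l \<in> \<sigma>" using assms(1) by blast
qed

end

context ctx begin

lemma fin_pos:
  assumes dD: "dinf = ereal D" and pL: "(p \<longlongrightarrow> L) at_top" and L: "L > 0"
  shows "\<exists>sm sp s. sm \<le> sp \<and> sp \<le> s \<and>
    (\<sigma> = ({sm..sp} \<union> {s..}) - (Dc \<union> {l. ereal l = dinf}) \<or> \<sigma> = {s..} - (Dc \<union> {l. ereal l = dinf}))"
proof -
  obtain Kr B C q0 where mn: "\<forall>l. l \<notin> Dc \<and> l \<noteq> D \<longrightarrow> (l \<in> \<sigma> \<longleftrightarrow> Kr^2 - ((q0-l)*(D-l) - C)*(L*(D-l) - B) \<ge> 0)"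
    using fin_case[OF dD pL] L by auto
  define b3 where "b3 = -((L*D - B) + L*(q0+D))"
  define c3 where "c3 = (q0+D)*(L*D-B) + L*(q0*D - C)"
  define e3 where "e3 = Kr^2 - (q0*D-C)*(L*D-B)"
  have poly: "Kr^2 - ((q0-l)*(D-l) - C)*(L*(D-l) - B) = L*l^3 + b3*l^2 + c3*l + e3" for l
    unfolding b3_def c3_def e3_def by (simp add: algebra_simps power2_eq_square power3_eq_cube)
  obtain sm sp s where s: "sm \<le> sp" "sp \<le> s"
    "{x. L*x^3+b3*x^2+c3*x+e3 \<ge> 0} = {sm..sp} \<union> {s..} \<or> {x. L*x^3+b3*x^2+c3*x+e3 \<ge> 0} = {s..}"
    using cubic_set[OF L, of b3 c3 e3] by blast
  have eq: "\<sigma> = S - (Dc \<union> {l. ereal l = dinf})" if "{x. L*x^3+b3*x^2+c3*x+e3 \<ge> 0} = S" for S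
  proof (rule sigma_eq[of "\<lambda>x. L*x^3+b3*x^2+c3*x+e3"])
    fix l assume "l \<notin> Dc" "ereal l \<noteq> dinf"
    then show "l \<in> \<sigma> \<longleftrightarrow> L*l^3+b3*l^2+c3*l+e3 \<ge> 0" using mn dD poly[of l] by auto
  qed (rule that)
  show ?thesis using s eq by blast
qed

lemma fin_zero:
  assumes dD: "dinf = ereal D" and pL: "(p \<longlongrightarrow> 0) at_top"
  shows "\<exists>sm sp. sm \<le> sp \<and> \<sigma> = ({..sm} \<union> {sp..}) - (Dc \<union> {l. ereal l = dinf})"
proof -
  obtain Kr B C q0 where B: "B > 0" and mn: "\<forall>l. l \<notin> Dc \<and> l \<noteq> D \<longrightarrow> (l \<in> \<sigma> \<longleftrightarrow> Kr^2 - ((q0-l)*(D-l) - C)*(0*(D-l) - B) \<ge> 0)"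
    using fin_case[OF dD pL] by auto
  have poly: "Kr^2 - ((q0-l)*(D-l) - C)*(0*(D-l) - B) = B*l^2 + (-B*(q0+D))*l + (Kr^2 + B*(q0*D - C))" for l
    by (simp add: algebra_simps power2_eq_square)
  obtain sm sp where s: "sm \<le> sp" "{x. B*x^2 + (-B*(q0+D))*x + (Kr^2 + B*(q0*D - C)) \<ge> 0} = {..sm} \<union> {sp..}"
    using quad_pos_set[OF B] by blast
  have "\<sigma> = ({..sm} \<union> {sp..}) - (Dc \<union> {l. ereal l = dinf})"
  proof (rule sigma_eq[of "\<lambda>x. B*x^2 + (-B*(q0+D))*x + (Kr^2 + B*(q0*D - C))"])
    fix l assume "l \<notin> Dc" "ereal l \<noteq> dinf"
    then show "l \<in> \<sigma> \<longleftrightarrow> B*l^2 + (-B*(q0+D))*l + (Kr^2 + B*(q0*D - C)) \<ge> 0" using mn dD poly[of l] by auto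
  qed (rule s(2))
  then show ?thesis using s(1) by blast
qed

lemma inf_pos:
  assumes inf: "dinf = \<infinity> \<or> dinf = -\<infinity>"
    and Lb: "((\<lambda>t. (cmod (b t))\<^sup>2 / (d t)\<^sup>2) \<longlongrightarrow> L) at_top" and L: "L > 0"
  shows "\<exists>sm sp. sm \<le> sp \<and> \<sigma> = {sm..sp} - Dc"
proof -
  obtain l0 P0 where hP0: "((\<lambda>t. pi_fn p b d t l0) \<longlongrightarrow> P0) at_top" using C1' by blast
  obtain Kr Q0 Cc where Cc: "Cc \<ge> 0" and hP: "\<forall>l. ((\<lambda>t. pi_fn p b d t l) \<longlongrightarrow> P0 + L*(l0-l)) at_top"
    and mn: "\<forall>l. l \<notin> Dc \<and> P0 + L*(l0-l) \<noteq> 0 \<longrightarrow> (l \<in> \<sigma> \<longleftrightarrow> Kr^2 - (Q0 - l*(1+Cc))*(P0 + L*(l0-l)) \<ge> 0)"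
    using inf_common[OF inf Lb hP0] by blast
  have Pne: "P0 + L*(l0-l) \<noteq> 0" if "l \<notin> Dc" for l
  proof
    assume "P0 + L*(l0-l) = 0"
    then have "((\<lambda>t. pi_fn p b d t l) \<longlongrightarrow> 0) at_top" using hP by metis
    then have "l \<in> Dc" by (rule delta_inf[OF inf Lb L])
    then show False using that by simp
  qed
  define a2 where "a2 = -(1+Cc)*L"
  define b2 where "b2 = Q0*L + (1+Cc)*(P0 + L*l0)"
  define c2 where "c2 = Kr^2 - Q0*(P0 + L*l0)"
  have poly: "Kr^2 - (Q0 - l*(1+Cc))*(P0 + L*(l0-l)) = a2*l^2 + b2*l + c2" for l
    unfolding a2_def b2_def c2_def by (simp add: algebra_simps power2_eq_square)
  have a2: "a2 < 0" unfolding a2_def by (rule mult_neg_pos) (use Cc L in auto)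
  define x0 where "x0 = l0 + P0/L"
  have "P0 + L*(l0-x0) = 0" unfolding x0_def using L by (simp add: field_simps)
  then have "a2*x0^2 + b2*x0 + c2 = Kr^2" using poly[of x0] by simp
  then have "a2*x0^2 + b2*x0 + c2 \<ge> 0" by simp
  then obtain sm sp where s: "sm \<le> sp" "{x. a2*x^2 + b2*x + c2 \<ge> 0} = {sm..sp}"
    using quad_neg_set[OF a2] by blast
  have "\<sigma> = {sm..sp} - (Dc \<union> {l. ereal l = dinf})"
  proof (rule sigma_eq[of "\<lambda>x. a2*x^2 + b2*x + c2"])
    fix l assume "l \<notin> Dc" "ereal l \<noteq> dinf"
    then show "l \<in> \<sigma> \<longleftrightarrow> a2*l^2 + b2*l + c2 \<ge> 0" using mn Pne poly[of l] by auto
  qed (rule s(2))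
  moreover have "{l. ereal l = dinf} = {}" using inf by auto
  ultimately show ?thesis using s(1) by auto
qed

lemma inf_zero:
  assumes inf: "dinf = \<infinity> \<or> dinf = -\<infinity>"
    and Lb: "((\<lambda>t. (cmod (b t))\<^sup>2 / (d t)\<^sup>2) \<longlongrightarrow> 0) at_top"
    and hP0: "((\<lambda>t. pi_fn p b d t l0) \<longlongrightarrow> P0) at_top" and P0: "P0 \<noteq> 0"
  shows "\<exists>s. (P0 > 0 \<longrightarrow> \<sigma> = {s..} - Dc) \<and> (P0 < 0 \<longrightarrow> \<sigma> = {..s} - Dc)"
proof -
  obtain Kr Q0 Cc where Cc: "Cc \<ge> 0"
    and mn: "\<forall>l. l \<notin> Dc \<and> P0 + 0*(l0-l) \<noteq> 0 \<longrightarrow> (l \<in> \<sigma> \<longleftrightarrow> Kr^2 - (Q0 - l*(1+Cc))*(P0 + 0*(l0-l)) \<ge> 0)"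
    using inf_common[OF inf Lb hP0] by blast
  define k where "k = P0*(1+Cc)"
  define m where "m = Kr^2 - Q0*P0"
  have poly: "Kr^2 - (Q0 - l*(1+Cc))*(P0 + 0*(l0-l)) = k*l + m" for l
    unfolding k_def m_def by (simp add: algebra_simps)
  have emp: "{l. ereal l = dinf} = {}" using inf by auto
  have eq: "\<sigma> = S - Dc" if "{x. k*x + m \<ge> 0} = S" for S
  proof -
    have "\<sigma> = S - (Dc \<union> {l. ereal l = dinf})"
    proof (rule sigma_eq[of "\<lambda>x. k*x + m"])
      fix l assume "l \<notin> Dc" "ereal l \<noteq> dinf"
      then show "l \<in> \<sigma> \<longleftrightarrow> k*l + m \<ge> 0" using mn P0 poly[of l] by auto
    qed (rule that)
    then show ?thesis using emp by simp
  qed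
  show ?thesis
  proof (cases "P0 > 0")
    case True
    then have "k > 0" unfolding k_def using Cc by simp
    then show ?thesis using eq[OF lin_pos_set] True by auto
  next
    case False
    then have "P0 < 0" using P0 by simp
    then have "k < 0" unfolding k_def using Cc by (simp add: mult_neg_pos)
    then show ?thesis using eq[OF lin_neg_set] False by auto
  qed
qed

end

context ctx begin

lemma final_fin:
  assumes fin: "dinf = ereal D"
  shows "\<exists>sm sp s :: real. sm \<le> sp \<and> sp \<le> s \<and>
     (\<forall>L. (p \<longlongrightarrow> L) at_top \<and> L > 0 \<longrightarrow>
             \<sigma> = ({sm..sp} \<union> {s..}) - (Dc \<union> {l. ereal l = dinf}) \<or> \<sigma> = {s..} - (Dc \<union> {l. ereal l = dinf})) \<and>
        ((p \<longlongrightarrow> 0) at_top \<longrightarrow> \<sigma> = ({..sm} \<union> {sp..}) - (Dc \<union> {l. ereal l = dinf}))"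
proof (cases "\<exists>L. (p \<longlongrightarrow> L) at_top \<and> L > 0")
  case True
  then obtain L where pL: "(p \<longlongrightarrow> L) at_top" and L: "L > 0" by blast
  obtain sm sp s where s: "sm \<le> sp" "sp \<le> s"
    "\<sigma> = ({sm..sp} \<union> {s..}) - (Dc \<union> {l. ereal l = dinf}) \<or> \<sigma> = {s..} - (Dc \<union> {l. ereal l = dinf})"
    using fin_pos[OF fin pL L] by blast
  have nz: "\<not> (p \<longlongrightarrow> 0) at_top"
  proof
    assume "(p \<longlongrightarrow> 0) at_top"
    then have "L = 0" using tendsto_unique[OF _ pL] by simp
    then show False using L by simp
  qed
  show ?thesis
    by (rule exI[of _ sm], rule exI[of _ sp], rule exI[of _ s]) (use s nz in simp)
next
  case F1: False
  show ?thesis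
  proof (cases "(p \<longlongrightarrow> 0) at_top")
    case True
    obtain sm sp where s: "sm \<le> sp" "\<sigma> = ({..sm} \<union> {sp..}) - (Dc \<union> {l. ereal l = dinf})"
      using fin_zero[OF fin True] by blast
    show ?thesis
    proof (rule exI[of _ sm], rule exI[of _ sp], rule exI[of _ sp], intro conjI allI impI order_refl s(1))
      fix L assume "(p \<longlongrightarrow> L) at_top \<and> 0 < L"
      then show "\<sigma> = ({sm..sp} \<union> {sp..}) - (Dc \<union> {l. ereal l = dinf}) \<or> \<sigma> = {sp..} - (Dc \<union> {l. ereal l = dinf})"
        using F1 by blast
    qed (rule s(2))
  next
    case False
    show ?thesis
      by (rule exI[of _ 0], rule exI[of _ 0], rule exI[of _ 0]) (use F1 False in auto)
  qed
qed

lemma final_pinf: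
  assumes pinf: "dinf = \<infinity>"
  shows "\<exists>sm sp s :: real. sm \<le> sp \<and> sp \<le> s \<and>
        (\<forall>L. ((\<lambda>t. (cmod (b t))\<^sup>2 / (d t)\<^sup>2) \<longlongrightarrow> L) at_top \<and> L > 0 \<longrightarrow> \<sigma> = {sm..sp} - Dc) \<and>
        (\<forall>M. ((\<lambda>t. (cmod (b t))\<^sup>2 / (d t)\<^sup>2) \<longlongrightarrow> 0) at_top \<and>
              ((\<lambda>t. p t - (cmod (b t))\<^sup>2 / d t) \<longlongrightarrow> M) at_top \<and> M > 0 \<longrightarrow> \<sigma> = {s..} - Dc) \<and>
        (\<forall>M. ((\<lambda>t. (cmod (b t))\<^sup>2 / (d t)\<^sup>2) \<longlongrightarrow> 0) at_top \<and>
              ((\<lambda>t. p t - (cmod (b t))\<^sup>2 / d t) \<longlongrightarrow> M) at_top \<and> M < 0 \<longrightarrow> \<sigma> = {..s} - Dc)"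
proof -
  have inf: "dinf = \<infinity> \<or> dinf = -\<infinity>" using pinf by simp
  show ?thesis
  proof (cases "\<exists>L. ((\<lambda>t. (cmod (b t))\<^sup>2 / (d t)\<^sup>2) \<longlongrightarrow> L) at_top \<and> L > 0")
    case True
    then obtain L where Lb: "((\<lambda>t. (cmod (b t))\<^sup>2 / (d t)\<^sup>2) \<longlongrightarrow> L) at_top" and L: "L > 0" by blast
    obtain sm sp where s: "sm \<le> sp" "\<sigma> = {sm..sp} - Dc" using inf_pos[OF inf Lb L] by blast
    have nz: "\<not> ((\<lambda>t. (cmod (b t))\<^sup>2 / (d t)\<^sup>2) \<longlongrightarrow> 0) at_top"
    proof
      assume "((\<lambda>t. (cmod (b t))\<^sup>2 / (d t)\<^sup>2) \<longlongrightarrow> 0) at_top"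
      then have "L = 0" using tendsto_unique[OF _ Lb] by simp
      then show False using L by simp
    qed
    show ?thesis
      by (rule exI[of _ sm], rule exI[of _ sp], rule exI[of _ sp]) (use s nz in simp)
  next
    case F1: False
    show ?thesis
    proof (cases "\<exists>M. ((\<lambda>t. (cmod (b t))\<^sup>2 / (d t)\<^sup>2) \<longlongrightarrow> 0) at_top \<and>
              ((\<lambda>t. p t - (cmod (b t))\<^sup>2 / d t) \<longlongrightarrow> M) at_top \<and> M \<noteq> 0")
      case True
      then obtain M where Lb: "((\<lambda>t. (cmod (b t))\<^sup>2 / (d t)\<^sup>2) \<longlongrightarrow> 0) at_top"
        and hM: "((\<lambda>t. p t - (cmod (b t))\<^sup>2 / d t) \<longlongrightarrow> M) at_top" and M: "M \<noteq> 0" by blast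
      have hP0: "((\<lambda>t. pi_fn p b d t 0) \<longlongrightarrow> M) at_top" using hM by (simp add: pi_fn_def)
      obtain s where s: "M > 0 \<longrightarrow> \<sigma> = {s..} - Dc" "M < 0 \<longrightarrow> \<sigma> = {..s} - Dc"
        using inf_zero[OF inf Lb hP0 M] by blast
      have uq: "M' = M" if "((\<lambda>t. p t - (cmod (b t))\<^sup>2 / d t) \<longlongrightarrow> M') at_top" for M'
        using tendsto_unique[OF _ that hM] by simp
      show ?thesis
      proof (rule exI[of _ s], rule exI[of _ s], rule exI[of _ s], intro conjI allI impI order_refl)
        fix L assume "((\<lambda>t. (cmod (b t))\<^sup>2 / (d t)\<^sup>2) \<longlongrightarrow> L) at_top \<and> 0 < L"
        then show "\<sigma> = {s..s} - Dc" using F1 by blast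
      next
        fix M' assume "((\<lambda>t. (cmod (b t))\<^sup>2 / (d t)\<^sup>2) \<longlongrightarrow> 0) at_top \<and>
              ((\<lambda>t. p t - (cmod (b t))\<^sup>2 / d t) \<longlongrightarrow> M') at_top \<and> M' > 0"
        then show "\<sigma> = {s..} - Dc" using uq s by blast
      next
        fix M' assume "((\<lambda>t. (cmod (b t))\<^sup>2 / (d t)\<^sup>2) \<longlongrightarrow> 0) at_top \<and>
              ((\<lambda>t. p t - (cmod (b t))\<^sup>2 / d t) \<longlongrightarrow> M') at_top \<and> M' < 0"
        then show "\<sigma> = {..s} - Dc" using uq s by blast
      qed
    next
      case F2: False
      show ?thesis
      proof (rule exI[of _ 0], rule exI[of _ 0], rule exI[of _ 0], intro conjI allI impI order_refl)
        fix L assume "((\<lambda>t. (cmod (b t))\<^sup>2 / (d t)\<^sup>2) \<longlongrightarrow> L) at_top \<and> 0 < L"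
        then show "\<sigma> = {0..0} - Dc" using F1 by blast
      next
        fix M' assume "((\<lambda>t. (cmod (b t))\<^sup>2 / (d t)\<^sup>2) \<longlongrightarrow> 0) at_top \<and>
              ((\<lambda>t. p t - (cmod (b t))\<^sup>2 / d t) \<longlongrightarrow> M') at_top \<and> M' > 0"
        then show "\<sigma> = {0..} - Dc" using F2 by force
      next
        fix M' assume "((\<lambda>t. (cmod (b t))\<^sup>2 / (d t)\<^sup>2) \<longlongrightarrow> 0) at_top \<and>
              ((\<lambda>t. p t - (cmod (b t))\<^sup>2 / d t) \<longlongrightarrow> M') at_top \<and> M' < 0"
        then show "\<sigma> = {..0} - Dc" using F2 by force
      qed
    qed
  qed
qed

lemma final_minf:
  assumes minf: "dinf = -\<infinity>"
  shows "\<exists>sm sp s :: real. sm \<le> sp \<and> sp \<le> s \<and>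
        (\<forall>L. ((\<lambda>t. (cmod (b t))\<^sup>2 / (d t)\<^sup>2) \<longlongrightarrow> L) at_top \<and> L > 0 \<longrightarrow> \<sigma> = {sm..sp} - Dc) \<and>
        (((\<lambda>t. (cmod (b t))\<^sup>2 / (d t)\<^sup>2) \<longlongrightarrow> 0) at_top \<longrightarrow> \<sigma> = {s..} - Dc)"
proof -
  have inf: "dinf = \<infinity> \<or> dinf = -\<infinity>" using minf by simp
  show ?thesis
  proof (cases "\<exists>L. ((\<lambda>t. (cmod (b t))\<^sup>2 / (d t)\<^sup>2) \<longlongrightarrow> L) at_top \<and> L > 0")
    case True
    then obtain L where Lb: "((\<lambda>t. (cmod (b t))\<^sup>2 / (d t)\<^sup>2) \<longlongrightarrow> L) at_top" and L: "L > 0" by blast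
    obtain sm sp where s: "sm \<le> sp" "\<sigma> = {sm..sp} - Dc" using inf_pos[OF inf Lb L] by blast
    have nz: "\<not> ((\<lambda>t. (cmod (b t))\<^sup>2 / (d t)\<^sup>2) \<longlongrightarrow> 0) at_top"
    proof
      assume "((\<lambda>t. (cmod (b t))\<^sup>2 / (d t)\<^sup>2) \<longlongrightarrow> 0) at_top"
      then have "L = 0" using tendsto_unique[OF _ Lb] by simp
      then show False using L by simp
    qed
    show ?thesis
      by (rule exI[of _ sm], rule exI[of _ sp], rule exI[of _ sp]) (use s nz in simp)
  next
    case F1: False
    show ?thesis
    proof (cases "((\<lambda>t. (cmod (b t))\<^sup>2 / (d t)\<^sup>2) \<longlongrightarrow> 0) at_top")
      case True
      obtain l0 P0 where hP0: "((\<lambda>t. pi_fn p b d t l0) \<longlongrightarrow> P0) at_top" and P0: "P0 \<noteq> 0"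
        using C1' by blast
      have "((\<lambda>t. ereal (d t)) \<longlongrightarrow> -\<infinity>) at_top" using B1 minf by simp
      then have "eventually (\<lambda>t. ereal (d t) < ereal l0) at_top"
        unfolding tendsto_MInfty by blast
      then have ev: "eventually (\<lambda>t. 0 \<le> pi_fn p b d t l0) at_top"
        using eventually_ge_at_top[of "0::real"]
      proof (rule eventually_elim2)
        fix t assume a: "ereal (d t) < ereal l0" "0 \<le> t"
        then have "d t - l0 < 0" "p t > 0" using p_pos by auto
        then have "(cmod (b t))\<^sup>2 / (d t - l0) \<le> 0" by (simp add: divide_nonneg_neg)
        then show "0 \<le> pi_fn p b d t l0" unfolding pi_fn_def using \<open>p t > 0\<close> by simp
      qed
      have "P0 \<ge> 0" by (rule tendsto_lowerbound[OF hP0 ev]) simp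
      then have Pp: "P0 > 0" using P0 by simp
      obtain s where s: "P0 > 0 \<longrightarrow> \<sigma> = {s..} - Dc"
        using inf_zero[OF inf True hP0 P0] by blast
      show ?thesis
        by (rule exI[of _ s], rule exI[of _ s], rule exI[of _ s]) (use s Pp F1 in auto)
    next
      case False
      show ?thesis
        by (rule exI[of _ 0], rule exI[of _ 0], rule exI[of _ 0]) (use F1 False in auto)
    qed
  qed
qed

end

theorem proposition5p3:
  fixes p d q :: "real \<Rightarrow> real" and b c :: "real \<Rightarrow> complex" and dinf :: ereal
  assumes p_C2: "C2_on {0..} p" and d_C2: "C2_on {0..} d" and b_C2: "C2_on {0..} b"
    and c_C1: "C1_on {0..} c" and q_cont: "continuous_on {0..} q"
    and p_pos: "\<forall>t\<ge>0. p t > 0"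
    and B1: "((\<lambda>t. ereal (d t)) \<longlongrightarrow> dinf) at_top"
    and B2: "\<exists>\<beta>>0. \<exists>\<gamma>>0. \<forall>t\<ge>0. cmod (b t) \<le> \<beta> * (\<bar>d t\<bar> + 1) \<and> cmod (c t) \<le> \<gamma> * (\<bar>d t\<bar> + 1)"
    and C1: "\<forall>l. l \<notin> closure (Delta p b d ` {0..}) \<and> ereal l \<noteq> dinf \<longrightarrow>
               (\<exists>L. ((\<lambda>t. pi_fn p b d t l) \<longlongrightarrow> L) at_top) \<and>
               (\<exists>L. ((\<lambda>t. deriv (\<lambda>s. pi_fn p b d s l) t) \<longlongrightarrow> L) at_top)"
    and C1': "\<exists>l. l \<notin> closure (Delta p b d ` {0..}) \<and> ereal l \<noteq> dinf \<and>
               (\<exists>L. ((\<lambda>t. pi_fn p b d t l) \<longlongrightarrow> L) at_top \<and> L \<noteq> 0)"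
    and C2: "\<forall>l. ereal l \<noteq> dinf \<longrightarrow>
               (\<exists>L. ((\<lambda>t. cnj (b t) * c t / complex_of_real (d t - l)) \<longlongrightarrow> L) at_top) \<and>
               (\<exists>L. ((\<lambda>t. vector_derivative (\<lambda>s. cnj (b s) * c s / complex_of_real (d s - l)) (at t))
                        \<longlongrightarrow> L) at_top)"
    and C3: "\<forall>l. ereal l \<noteq> dinf \<longrightarrow>
               (\<exists>L. ((\<lambda>t. q t - l - (cmod (c t))\<^sup>2 / (d t - l)) \<longlongrightarrow> L) at_top)"
  shows "\<exists>sm sp s :: real. sm \<le> sp \<and> sp \<le> s \<and>
    (let \<sigma> = sigma_s p q b c d dinf;
         Dc = closure (Delta p b d ` {0..});
         E = Dc \<union> {l. ereal l = dinf}
     in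
     ((\<exists>r. dinf = ereal r) \<longrightarrow>
        (\<forall>L. (p \<longlongrightarrow> L) at_top \<and> L > 0 \<longrightarrow>
             \<sigma> = ({sm..sp} \<union> {s..}) - E \<or> \<sigma> = {s..} - E) \<and>
        ((p \<longlongrightarrow> 0) at_top \<longrightarrow> \<sigma> = ({..sm} \<union> {sp..}) - E)) \<and>
     (dinf = \<infinity> \<longrightarrow>
        (\<forall>L. ((\<lambda>t. (cmod (b t))\<^sup>2 / (d t)\<^sup>2) \<longlongrightarrow> L) at_top \<and> L > 0 \<longrightarrow> \<sigma> = {sm..sp} - Dc) \<and>
        (\<forall>M. ((\<lambda>t. (cmod (b t))\<^sup>2 / (d t)\<^sup>2) \<longlongrightarrow> 0) at_top \<and>
              ((\<lambda>t. p t - (cmod (b t))\<^sup>2 / d t) \<longlongrightarrow> M) at_top \<and> M > 0 \<longrightarrow> \<sigma> = {s..} - Dc) \<and>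
        (\<forall>M. ((\<lambda>t. (cmod (b t))\<^sup>2 / (d t)\<^sup>2) \<longlongrightarrow> 0) at_top \<and>
              ((\<lambda>t. p t - (cmod (b t))\<^sup>2 / d t) \<longlongrightarrow> M) at_top \<and> M < 0 \<longrightarrow> \<sigma> = {..s} - Dc)) \<and>
     (dinf = - \<infinity> \<longrightarrow>
        (\<forall>L. ((\<lambda>t. (cmod (b t))\<^sup>2 / (d t)\<^sup>2) \<longlongrightarrow> L) at_top \<and> L > 0 \<longrightarrow> \<sigma> = {sm..sp} - Dc) \<and>
        (((\<lambda>t. (cmod (b t))\<^sup>2 / (d t)\<^sup>2) \<longlongrightarrow> 0) at_top \<longrightarrow> \<sigma> = {s..} - Dc)))"
proof -
  interpret ctx p d q b c dinf
    by (rule ctx.intro[OF p_C2 d_C2 b_C2 c_C1 p_pos B1 C1 C1' C2 C3])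
  consider (fin) D where "dinf = ereal D" | (pinf) "dinf = \<infinity>" | (minf) "dinf = -\<infinity>"
    by (cases dinf) auto
  then show ?thesis
  proof cases
    case fin
    obtain sm sp s where s: "sm \<le> sp" "sp \<le> s"
      "\<forall>L. (p \<longlongrightarrow> L) at_top \<and> L > 0 \<longrightarrow>
             \<sigma> = ({sm..sp} \<union> {s..}) - (Dc \<union> {l. ereal l = dinf}) \<or> \<sigma> = {s..} - (Dc \<union> {l. ereal l = dinf})"
      "(p \<longlongrightarrow> 0) at_top \<longrightarrow> \<sigma> = ({..sm} \<union> {sp..}) - (Dc \<union> {l. ereal l = dinf})"
      using final_fin[OF fin] by blast
    show ?thesis unfolding Let_def
      by (rule exI[of _ sm], rule exI[of _ sp], rule exI[of _ s], intro conjI impI s) (use fin in simp_all)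
  next
    case pinf
    obtain sm sp s where s: "sm \<le> sp" "sp \<le> s"
        "\<forall>L. ((\<lambda>t. (cmod (b t))\<^sup>2 / (d t)\<^sup>2) \<longlongrightarrow> L) at_top \<and> L > 0 \<longrightarrow> \<sigma> = {sm..sp} - Dc"
        "\<forall>M. ((\<lambda>t. (cmod (b t))\<^sup>2 / (d t)\<^sup>2) \<longlongrightarrow> 0) at_top \<and>
              ((\<lambda>t. p t - (cmod (b t))\<^sup>2 / d t) \<longlongrightarrow> M) at_top \<and> M > 0 \<longrightarrow> \<sigma> = {s..} - Dc"
        "\<forall>M. ((\<lambda>t. (cmod (b t))\<^sup>2 / (d t)\<^sup>2) \<longlongrightarrow> 0) at_top \<and>
              ((\<lambda>t. p t - (cmod (b t))\<^sup>2 / d t) \<longlongrightarrow> M) at_top \<and> M < 0 \<longrightarrow> \<sigma> = {..s} - Dc"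
      using final_pinf[OF pinf] by blast
    show ?thesis unfolding Let_def
      by (rule exI[of _ sm], rule exI[of _ sp], rule exI[of _ s], intro conjI impI s) (use pinf in simp_all)
  next
    case minf
    obtain sm sp s where s: "sm \<le> sp" "sp \<le> s"
        "\<forall>L. ((\<lambda>t. (cmod (b t))\<^sup>2 / (d t)\<^sup>2) \<longlongrightarrow> L) at_top \<and> L > 0 \<longrightarrow> \<sigma> = {sm..sp} - Dc"
        "((\<lambda>t. (cmod (b t))\<^sup>2 / (d t)\<^sup>2) \<longlongrightarrow> 0) at_top \<longrightarrow> \<sigma> = {s..} - Dc"
      using final_minf[OF minf] by blast
    show ?thesis unfolding Let_def
      by (rule exI[of _ sm], rule exI[of _ sp], rule exI[of _ s], intro conjI impI s) (use minf in simp_all)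
  qed
qed

end
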